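(* Let $A\bowtie^{\theta} I$ be an amalgamated Banach algebra as in the context. Then $A\bowtie^{\theta} I$ is Arens regular if and only if all of the following hold: $A$ is Arens regular; $I$ is Arens regular; and for every $F\in\theta^{**}(A^{**})$ and every $G\in I^{**}$ one has $F\Box G=F\Diamond G$ and $G\Box F=G\Diamond F$ (products in $B^{**}$), i.e. $\theta(A)$ and $I$ act regularly on each other.
   Context: Let $A$ and $B$ be Banach algebras, $\theta:A\to B$ a continuous algebra homomorphism with $\|\theta\|\le 1$, and $I$ a closed two-sided ideal of $B$. The amalgamated Banach algebra $A\bowtie^{\theta} I$ is the Banach space $\{(a,i): a\in A,\ i\in I\}$ with norm $\|(a,i)\|=\|a\|+\|i\|$ and product $(a,i)\cdot(a',i')=(aa',\ \theta(a)i'+i\theta(a')+ii')$. Arens products: for a Banach algebra $C$, $a,b\in C$, $f\in C^*$, $F,G\in C^{**}$, define $\langle a\cdot f,b\rangle=\langle f,ba\rangle$, $\langle f\cdot a,b\rangle=\langle f,ab\rangle$, $\langle f\cdot F,a\rangle=\langle F,a\cdot f\rangle$, $\langle F\cdot f,a\rangle=\langle F,f\cdot a\rangle$, $\langle F\Box G,f\rangle=\langle F,G\cdot f\rangle$, $\langle F\Diamond G,f\rangle=\langle G,f\cdot F\rangle$. $C$ is Arens regular if $F\Box G=F\Diamond G$ for all $F,G\in C^{**}$. $I^{**}$ is identified with the weak$^*$-closure of $I$ in $B^{**}$ and $\theta^{**}:A^{**}\to B^{**}$ is the second adjoint of $\theta$. *)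

theory Defs
  imports "HOL-Analysis.Analysis"
begin

text \<open>A (real) normed algebra is described concretely by a carrier S (a linear
subspace of an ambient real vector space), a norm N and a multiplication M.
Functionals are extensional: they vanish outside their domain.\<close>

definition lin_on :: "'v::real_vector set \<Rightarrow> ('v \<Rightarrow> real) \<Rightarrow> bool" where
  "lin_on S f \<longleftrightarrow> (\<forall>x\<in>S. \<forall>y\<in>S. f (x + y) = f x + f y) \<and> (\<forall>c. \<forall>x\<in>S. f (c *\<^sub>R x) = c * f x)"

definition dual :: "'v::real_vector set \<Rightarrow> ('v \<Rightarrow> real) \<Rightarrow> ('v \<Rightarrow> real) set" where
  "dual S N = {f. lin_on S f \<and> (\<exists>K. \<forall>x\<in>S. \<bar>f x\<bar> \<le> K * N x) \<and> (\<forall>x. x \<notin> S \<longrightarrow> f x = 0)}"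

definition dual_norm :: "'v::real_vector set \<Rightarrow> ('v \<Rightarrow> real) \<Rightarrow> ('v \<Rightarrow> real) \<Rightarrow> real" where
  "dual_norm S N f = Sup ((\<lambda>x. \<bar>f x\<bar>) ` {x\<in>S. N x \<le> 1})"

definition bidual :: "'v::real_vector set \<Rightarrow> ('v \<Rightarrow> real) \<Rightarrow> (('v \<Rightarrow> real) \<Rightarrow> real) set" where
  "bidual S N = {F. (\<forall>f\<in>dual S N. \<forall>g\<in>dual S N. F (\<lambda>x. f x + g x) = F f + F g)
      \<and> (\<forall>c. \<forall>f\<in>dual S N. F (\<lambda>x. c * f x) = c * F f)
      \<and> (\<exists>K. \<forall>f\<in>dual S N. \<bar>F f\<bar> \<le> K * dual_norm S N f)
      \<and> (\<forall>f. f \<notin> dual S N \<longrightarrow> F f = 0)}"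

definition lmod :: "'v set \<Rightarrow> ('v \<Rightarrow> 'v \<Rightarrow> 'v) \<Rightarrow> 'v \<Rightarrow> ('v \<Rightarrow> real) \<Rightarrow> 'v \<Rightarrow> real" where
  "lmod S M a f = (\<lambda>b. if b \<in> S then f (M b a) else 0)"

definition rmod :: "'v set \<Rightarrow> ('v \<Rightarrow> 'v \<Rightarrow> 'v) \<Rightarrow> ('v \<Rightarrow> real) \<Rightarrow> 'v \<Rightarrow> 'v \<Rightarrow> real" where
  "rmod S M f a = (\<lambda>b. if b \<in> S then f (M a b) else 0)"

definition fF :: "'v set \<Rightarrow> ('v \<Rightarrow> 'v \<Rightarrow> 'v) \<Rightarrow> ('v \<Rightarrow> real) \<Rightarrow> (('v \<Rightarrow> real) \<Rightarrow> real) \<Rightarrow> 'v \<Rightarrow> real" where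
  "fF S M f F = (\<lambda>a. if a \<in> S then F (lmod S M a f) else 0)"

definition Ff :: "'v set \<Rightarrow> ('v \<Rightarrow> 'v \<Rightarrow> 'v) \<Rightarrow> (('v \<Rightarrow> real) \<Rightarrow> real) \<Rightarrow> ('v \<Rightarrow> real) \<Rightarrow> 'v \<Rightarrow> real" where
  "Ff S M F f = (\<lambda>a. if a \<in> S then F (rmod S M f a) else 0)"

definition arens_box :: "'v::real_vector set \<Rightarrow> ('v \<Rightarrow> real) \<Rightarrow> ('v \<Rightarrow> 'v \<Rightarrow> 'v)
    \<Rightarrow> (('v \<Rightarrow> real) \<Rightarrow> real) \<Rightarrow> (('v \<Rightarrow> real) \<Rightarrow> real) \<Rightarrow> ('v \<Rightarrow> real) \<Rightarrow> real" where
  "arens_box S N M F G = (\<lambda>f. if f \<in> dual S N then F (Ff S M G f) else 0)"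

definition arens_diamond :: "'v::real_vector set \<Rightarrow> ('v \<Rightarrow> real) \<Rightarrow> ('v \<Rightarrow> 'v \<Rightarrow> 'v)
    \<Rightarrow> (('v \<Rightarrow> real) \<Rightarrow> real) \<Rightarrow> (('v \<Rightarrow> real) \<Rightarrow> real) \<Rightarrow> ('v \<Rightarrow> real) \<Rightarrow> real" where
  "arens_diamond S N M F G = (\<lambda>f. if f \<in> dual S N then G (fF S M f F) else 0)"

definition arens_regular :: "'v::real_vector set \<Rightarrow> ('v \<Rightarrow> real) \<Rightarrow> ('v \<Rightarrow> 'v \<Rightarrow> 'v) \<Rightarrow> bool" where
  "arens_regular S N M \<longleftrightarrow>
     (\<forall>F\<in>bidual S N. \<forall>G\<in>bidual S N. arens_box S N M F G = arens_diamond S N M F G)"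

text \<open>Amalgamated algebra A \<bowtie>^\<theta> I, realised as the subspace UNIV \<times> I of 'a \<times> 'b\<close>
definition amalg_carrier :: "'b set \<Rightarrow> ('a \<times> 'b) set" where
  "amalg_carrier I = {(a, i). i \<in> I}"

definition amalg_norm :: "('a::real_normed_vector \<times> 'b::real_normed_vector) \<Rightarrow> real" where
  "amalg_norm p = norm (fst p) + norm (snd p)"

definition amalg_mult :: "('a::times \<Rightarrow> 'b::{times,plus}) \<Rightarrow> ('a \<times> 'b) \<Rightarrow> ('a \<times> 'b) \<Rightarrow> ('a \<times> 'b)" where
  "amalg_mult \<theta> p q = (fst p * fst q, \<theta> (fst p) * snd q + snd p * \<theta> (fst q) + snd p * snd q)"

definition second_adjoint :: "('a \<Rightarrow> 'b::real_normed_vector) \<Rightarrow> (('a \<Rightarrow> real) \<Rightarrow> real) \<Rightarrow> ('b \<Rightarrow> real) \<Rightarrow> real" where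
  "second_adjoint \<theta> F = (\<lambda>g. if g \<in> dual (UNIV::'b set) norm then F (\<lambda>a. g (\<theta> a)) else 0)"

text \<open>The canonical identification of I** with the weak*-closure of I in B**:
  the second adjoint of the inclusion I \<hookrightarrow> B.\<close>
definition incl_bidual :: "'b::real_normed_vector set \<Rightarrow> (('b \<Rightarrow> real) \<Rightarrow> real) \<Rightarrow> ('b \<Rightarrow> real) \<Rightarrow> real" where
  "incl_bidual I G = (\<lambda>g. if g \<in> dual (UNIV::'b set) norm then G (\<lambda>x. if x \<in> I then g x else 0) else 0)"

end

theory Submission
  imports Defs
begin


definition hb_graphs :: "'b::real_normed_vector set \<Rightarrow> ('b \<Rightarrow> real) \<Rightarrow> real \<Rightarrow> ('b \<times> real) set set" where
  "hb_graphs I \<phi> K = {G. (\<forall>x y z. (x,y)\<in>G \<longrightarrow> (x,z)\<in>G \<longrightarrow> y = z)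
     \<and> (\<forall>x a y b. (x,a)\<in>G \<longrightarrow> (y,b)\<in>G \<longrightarrow> (x+y, a+b)\<in>G)
     \<and> (\<forall>c x a. (x,a)\<in>G \<longrightarrow> (c*\<^sub>R x, c*a)\<in>G)
     \<and> (\<forall>x a. (x,a)\<in>G \<longrightarrow> a \<le> K*norm x)
     \<and> (\<forall>x\<in>I. (x, \<phi> x)\<in>G)}"

lemma hb_chain_two:
  assumes "subset.chain A C" "p \<in> \<Union>C" "q \<in> \<Union>C"
  shows "\<exists>G\<in>C. p \<in> G \<and> q \<in> G"
proof -
  obtain G1 G2 where "G1 \<in> C" "G2 \<in> C" "p \<in> G1" "q \<in> G2" using assms by auto
  moreover have "G1 \<subseteq> G2 \<or> G2 \<subseteq> G1" using assms(1) \<open>G1 \<in> C\<close> \<open>G2 \<in> C\<close>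
    by (auto simp: subset_chain_def)
  ultimately show ?thesis by blast
qed

lemma hahn_banach_norm:
  fixes I :: "'b::real_normed_vector set" and \<phi> :: "'b \<Rightarrow> real"
  assumes I: "subspace I" and lin: "lin_on I \<phi>" and bd: "\<forall>x\<in>I. \<bar>\<phi> x\<bar> \<le> K * norm x" and K: "K \<ge> 0"
  shows "\<exists>g. lin_on UNIV g \<and> (\<forall>x. \<bar>g x\<bar> \<le> K * norm x) \<and> (\<forall>x\<in>I. g x = \<phi> x)"
proof -
  let ?A = "hb_graphs I \<phi> K"
  have G0: "{(x, \<phi> x) | x. x \<in> I} \<in> ?A"
  proof -
    have "\<phi> (x + y) = \<phi> x + \<phi> y" if "x \<in> I" "y \<in> I" for x y
      using lin that unfolding lin_on_def by blast
    moreover have "\<phi> (c *\<^sub>R x) = c * \<phi> x" if "x \<in> I" for c x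
      using lin that unfolding lin_on_def by blast
    moreover have "\<phi> x \<le> K * norm x" if "x \<in> I" for x
      using bd that by force
    ultimately show ?thesis using I
      unfolding hb_graphs_def by (auto simp: subspace_add subspace_mul)
  qed
  have "\<exists>M\<in>?A. \<forall>X\<in>?A. M \<subseteq> X \<longrightarrow> X = M"
  proof (rule subset_Zorn_nonempty)
    show "?A \<noteq> {}" using G0 by blast
  next
    fix C assume C: "C \<noteq> {}" "subset.chain ?A C"
    have CA: "C \<subseteq> ?A" using C(2) by (auto simp: subset_chain_def)
    show "\<Union>C \<in> ?A"
      unfolding hb_graphs_def
    proof (intro CollectI conjI allI impI ballI)
      fix x y z assume "(x,y) \<in> \<Union>C" "(x,z) \<in> \<Union>C"
      then obtain G where "G \<in> C" "(x,y) \<in> G" "(x,z) \<in> G" using hb_chain_two[OF C(2)] by blast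
      then show "y = z" using CA unfolding hb_graphs_def by blast
    next
      fix x a y b assume "(x,a) \<in> \<Union>C" "(y,b) \<in> \<Union>C"
      then obtain G where "G \<in> C" "(x,a) \<in> G" "(y,b) \<in> G" using hb_chain_two[OF C(2)] by blast
      then show "(x+y, a+b) \<in> \<Union>C" using CA unfolding hb_graphs_def by blast
    next
      fix c x a assume "(x,a) \<in> \<Union>C"
      then obtain G where "G \<in> C" "(x,a) \<in> G" by blast
      then show "(c*\<^sub>R x, c*a) \<in> \<Union>C" using CA unfolding hb_graphs_def by blast
    next
      fix x a assume "(x,a) \<in> \<Union>C"
      then obtain G where "G \<in> C" "(x,a) \<in> G" by blast
      then show "a \<le> K * norm x" using CA unfolding hb_graphs_def by blast
    next
      fix x assume "x \<in> I"
      obtain G where "G \<in> C" using C(1) by blast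
      then show "(x, \<phi> x) \<in> \<Union>C" using CA \<open>x \<in> I\<close> unfolding hb_graphs_def by blast
    qed
  qed
  then obtain M where MA: "M \<in> ?A" and Mmax: "\<And>X. X \<in> ?A \<Longrightarrow> M \<subseteq> X \<Longrightarrow> X = M" by blast
  have Mfun: "\<And>x y z. (x,y)\<in>M \<Longrightarrow> (x,z)\<in>M \<Longrightarrow> y = z"
    and Madd: "\<And>x a y b. (x,a)\<in>M \<Longrightarrow> (y,b)\<in>M \<Longrightarrow> (x+y, a+b)\<in>M"
    and Mscale: "\<And>c x a. (x,a)\<in>M \<Longrightarrow> (c*\<^sub>R x, c*a)\<in>M"
    and Mdom: "\<And>x a. (x,a)\<in>M \<Longrightarrow> a \<le> K*norm x"
    and MI: "\<And>x. x\<in>I \<Longrightarrow> (x, \<phi> x)\<in>M"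
    using MA unfolding hb_graphs_def by blast+
  have M00: "(0, 0) \<in> M" using MI[OF subspace_0[OF I]] Mscale[of 0 _ _] 
    by (metis mult_zero_left scaleR_zero_left)
  have total: "\<exists>a. (y, a) \<in> M" for y
  proof (rule ccontr)
    assume ny: "\<not> (\<exists>a. (y, a) \<in> M)"
    define T where "T = {a - K * norm (x - y) | x a. (x,a) \<in> M}"
    define c where "c = Sup T"
    have key: "a - K * norm (x - y) \<le> K * norm (z + y) - b" if "(x,a) \<in> M" "(z,b) \<in> M" for x a z b
    proof -
      have "a + b \<le> K * norm (x + z)" using Mdom[OF Madd[OF that]] .
      also have "norm (x + z) \<le> norm (x - y) + norm (z + y)"
        using norm_triangle_ineq[of "x - y" "z + y"] by simp
      hence "K * norm (x + z) \<le> K * (norm (x - y) + norm (z + y))" using K by (rule mult_left_mono)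
      finally show ?thesis by (simp add: algebra_simps)
    qed
    have Tne: "T \<noteq> {}" using M00 unfolding T_def by blast
    have Tbdd: "bdd_above T" unfolding T_def bdd_above_def
      using key[OF _ M00] by (intro exI[of _ "K * norm (0 + y) - 0"]) auto
    have c_ge: "a - K * norm (x - y) \<le> c" if "(x,a) \<in> M" for x a
      unfolding c_def using that Tbdd by (intro cSup_upper) (auto simp: T_def)
    have c_le: "c \<le> K * norm (z + y) - b" if "(z,b) \<in> M" for z b
      unfolding c_def using Tne key[OF _ that] by (intro cSup_least) (auto simp: T_def)
    define M' where "M' = {(x + t *\<^sub>R y, a + t * c) | x a t. (x,a) \<in> M}"
    have dom': "a + t * c \<le> K * norm (x + t *\<^sub>R y)" if xa: "(x,a) \<in> M" for x a t
    proof (cases "t = 0")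
      case True then show ?thesis using Mdom[OF xa] by simp
    next
      case False
      show ?thesis
      proof (cases "t > 0")
        case True
        have m: "(inverse t *\<^sub>R x, inverse t * a) \<in> M" by (rule Mscale[OF xa])
        have "c \<le> K * norm (inverse t *\<^sub>R x + y) - inverse t * a" by (rule c_le[OF m])
        hence "t * c \<le> t * (K * norm (inverse t *\<^sub>R x + y) - inverse t * a)"
          using True by (simp add: mult_left_mono)
        also have "t * (K * norm (inverse t *\<^sub>R x + y) - inverse t * a) = K * (t * norm (inverse t *\<^sub>R x + y)) - a"
          using True by (simp add: algebra_simps)
        also have "t * norm (inverse t *\<^sub>R x + y) = norm (t *\<^sub>R (inverse t *\<^sub>R x + y))"
          using True by simp
        also have "t *\<^sub>R (inverse t *\<^sub>R x + y) = x + t *\<^sub>R y"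
          using True by (simp add: scaleR_add_right)
        finally show ?thesis by simp
      next
        case False
        hence s: "- t > 0" using \<open>t \<noteq> 0\<close> by simp
        have m: "(inverse (-t) *\<^sub>R x, inverse (-t) * a) \<in> M" by (rule Mscale[OF xa])
        have "inverse (-t) * a - K * norm (inverse (-t) *\<^sub>R x - y) \<le> c" by (rule c_ge[OF m])
        hence "(-t) * (inverse (-t) * a - K * norm (inverse (-t) *\<^sub>R x - y)) \<le> (-t) * c"
          using s by (simp add: mult_left_mono)
        also have "(-t) * (inverse (-t) * a - K * norm (inverse (-t) *\<^sub>R x - y)) = a - K * ((-t) * norm (inverse (-t) *\<^sub>R x - y))"
          using s by (simp add: algebra_simps)
        also have "(-t) * norm (inverse (-t) *\<^sub>R x - y) = norm ((-t) *\<^sub>R (inverse (-t) *\<^sub>R x - y))"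
          using s by simp
        also have "(-t) *\<^sub>R (inverse (-t) *\<^sub>R x - y) = x + t *\<^sub>R y"
          using s by (simp add: scaleR_diff_right)
        finally show ?thesis by simp
      qed
    qed
    have inD: False if "(x,a) \<in> M" "(x',a') \<in> M" "x + t *\<^sub>R y = x' + t' *\<^sub>R y" "t \<noteq> t'" for x a x' a' t t'
    proof -
      have "(x + (-1) *\<^sub>R x', a + (-1) * a') \<in> M" using Madd[OF that(1) Mscale[OF that(2)]] .
      hence "(inverse (t' - t) *\<^sub>R (x - x'), inverse (t' - t) * (a - a')) \<in> M"
        using Mscale by simp
      moreover have "x - x' = (t' - t) *\<^sub>R y" using that(3) by (simp add: algebra_simps)
      hence "inverse (t' - t) *\<^sub>R (x - x') = y" using that(4) by simp
      ultimately show False using ny by auto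
    qed
    have M'A: "M' \<in> ?A"
      unfolding hb_graphs_def
    proof (intro CollectI conjI allI impI ballI)
      fix p u v assume "(p,u) \<in> M'" "(p,v) \<in> M'"
      then obtain x a t x' a' t' where e: "(x,a)\<in>M" "(x',a')\<in>M" "p = x + t *\<^sub>R y" "u = a + t * c"
        "p = x' + t' *\<^sub>R y" "v = a' + t' * c" unfolding M'_def by blast
      have "t = t'" using inD[OF e(1,2)] e(3,5) by metis
      then have "x = x'" using e(3,5) by simp
      then have "a = a'" using Mfun e(1,2) by blast
      then show "u = v" using e \<open>t = t'\<close> by simp
    next
      fix p u q v assume "(p,u) \<in> M'" "(q,v) \<in> M'"
      then obtain x a t x' a' t' where e: "(x,a)\<in>M" "(x',a')\<in>M" "p = x + t *\<^sub>R y" "u = a + t * c"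
        "q = x' + t' *\<^sub>R y" "v = a' + t' * c" unfolding M'_def by blast
      have "(x + x', a + a') \<in> M" using Madd e by blast
      moreover have "p + q = (x + x') + (t + t') *\<^sub>R y" "u + v = (a + a') + (t + t') * c"
        using e by (simp_all add: algebra_simps)
      ultimately show "(p + q, u + v) \<in> M'" unfolding M'_def by blast
    next
      fix r p u assume "(p,u) \<in> M'"
      then obtain x a t where e: "(x,a)\<in>M" "p = x + t *\<^sub>R y" "u = a + t * c"
        unfolding M'_def by blast
      have "(r *\<^sub>R x, r * a) \<in> M" using Mscale e by blast
      moreover have "r *\<^sub>R p = r *\<^sub>R x + (r * t) *\<^sub>R y" "r * u = r * a + (r * t) * c"
        using e by (simp_all add: algebra_simps)
      ultimately show "(r *\<^sub>R p, r * u) \<in> M'" unfolding M'_def by blast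
    next
      fix p u assume "(p,u) \<in> M'"
      then obtain x a t where e: "(x,a)\<in>M" "p = x + t *\<^sub>R y" "u = a + t * c"
        unfolding M'_def by blast
      then show "u \<le> K * norm p" using dom' by simp
    next
      fix x assume "x \<in> I"
      then have "(x, \<phi> x) \<in> M" by (rule MI)
      then have "(x + 0 *\<^sub>R y, \<phi> x + 0 * c) \<in> M'" unfolding M'_def by blast
      then show "(x, \<phi> x) \<in> M'" by simp
    qed
    have sub: "M \<subseteq> M'"
    proof
      fix p assume "p \<in> M"
      then obtain x a where "p = (x,a)" "(x,a) \<in> M" by (cases p) auto
      then have "(x + 0 *\<^sub>R y, a + 0 * c) \<in> M'" unfolding M'_def by blast
      then show "p \<in> M'" using \<open>p = (x,a)\<close> by simp
    qed
    have "(0 + 1 *\<^sub>R y, 0 + 1 * c) \<in> M'" using M00 unfolding M'_def by blast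
    hence "(y, c) \<in> M'" by simp
    moreover have "M' = M" using Mmax[OF M'A sub] .
    ultimately show False using ny by blast
  qed
  define g where "g x = (THE a. (x,a) \<in> M)" for x
  have gM: "(x, g x) \<in> M" for x
  proof -
    obtain a where "(x,a) \<in> M" using total by blast
    then have "(THE a. (x,a) \<in> M) = a" using Mfun by blast
    then show ?thesis using \<open>(x,a) \<in> M\<close> unfolding g_def by simp
  qed
  have gadd: "g (x + y) = g x + g y" for x y using Mfun[OF gM Madd[OF gM gM]] .
  have gscale: "g (c *\<^sub>R x) = c * g x" for c x using Mfun[OF gM Mscale[OF gM]] .
  have gle: "g x \<le> K * norm x" for x using Mdom[OF gM] .
  have "\<bar>g x\<bar> \<le> K * norm x" for x
  proof -
    have "g ((-1) *\<^sub>R x) \<le> K * norm ((-1) *\<^sub>R x)" by (rule gle)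
    hence "- g x \<le> K * norm x" using gscale[of "-1" x] by simp
    thus ?thesis using gle[of x] by linarith
  qed
  moreover have "g x = \<phi> x" if "x \<in> I" for x using Mfun[OF gM MI[OF that]] .
  moreover have "lin_on UNIV g" unfolding lin_on_def using gadd gscale by simp
  ultimately show ?thesis by blast
qed



locale nalg =
  fixes S :: "'v::real_vector set" and N :: "'v \<Rightarrow> real" and M :: "'v \<Rightarrow> 'v \<Rightarrow> 'v"
  assumes sub: "subspace S"
    and N_nonneg: "\<And>x. N x \<ge> 0"
    and N0: "N 0 = 0"
    and Mclosed: "\<And>x y. x \<in> S \<Longrightarrow> y \<in> S \<Longrightarrow> M x y \<in> S"
    and add_left: "\<And>x y z. x \<in> S \<Longrightarrow> y \<in> S \<Longrightarrow> z \<in> S \<Longrightarrow> M (x + y) z = M x z + M y z"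
    and add_right: "\<And>x y z. x \<in> S \<Longrightarrow> y \<in> S \<Longrightarrow> z \<in> S \<Longrightarrow> M x (y + z) = M x y + M x z"
    and scale_left: "\<And>c x y. x \<in> S \<Longrightarrow> y \<in> S \<Longrightarrow> M (c *\<^sub>R x) y = c *\<^sub>R M x y"
    and scale_right: "\<And>c x y. x \<in> S \<Longrightarrow> y \<in> S \<Longrightarrow> M x (c *\<^sub>R y) = c *\<^sub>R M x y"
    and Nmult: "\<And>x y. x \<in> S \<Longrightarrow> y \<in> S \<Longrightarrow> N (M x y) \<le> N x * N y"
begin

lemma S0: "0 \<in> S" using sub by (rule subspace_0)
lemma Sadd: "x \<in> S \<Longrightarrow> y \<in> S \<Longrightarrow> x + y \<in> S" using sub by (rule subspace_add)
lemma Sscale: "x \<in> S \<Longrightarrow> c *\<^sub>R x \<in> S" using sub by (rule subspace_mul)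

lemma dualI:
  assumes "\<And>x y. x \<in> S \<Longrightarrow> y \<in> S \<Longrightarrow> f (x + y) = f x + f y"
    and "\<And>c x. x \<in> S \<Longrightarrow> f (c *\<^sub>R x) = c * f x"
    and "\<And>x. x \<in> S \<Longrightarrow> \<bar>f x\<bar> \<le> K * N x"
    and "\<And>x. x \<notin> S \<Longrightarrow> f x = 0"
  shows "f \<in> dual S N"
  using assms unfolding dual_def lin_on_def by blast

lemma dual_add: "f \<in> dual S N \<Longrightarrow> x \<in> S \<Longrightarrow> y \<in> S \<Longrightarrow> f (x + y) = f x + f y"
  unfolding dual_def lin_on_def by blast
lemma dual_scale: "f \<in> dual S N \<Longrightarrow> x \<in> S \<Longrightarrow> f (c *\<^sub>R x) = c * f x"
  unfolding dual_def lin_on_def by blast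
lemma dual_out: "f \<in> dual S N \<Longrightarrow> x \<notin> S \<Longrightarrow> f x = 0"
  unfolding dual_def by blast
lemma dual_0: "f \<in> dual S N \<Longrightarrow> f 0 = 0"
  using dual_scale[of f 0 0] S0 by simp

lemma dual_bound:
  assumes "f \<in> dual S N" obtains K where "K \<ge> 0" "\<And>x. x \<in> S \<Longrightarrow> \<bar>f x\<bar> \<le> K * N x"
proof -
  obtain K where K: "\<And>x. x \<in> S \<Longrightarrow> \<bar>f x\<bar> \<le> K * N x" using assms unfolding dual_def by blast
  have "\<bar>f x\<bar> \<le> max K 0 * N x" if "x \<in> S" for x
    using K[OF that] N_nonneg[of x] by (smt (verit) mult_right_mono)
  then show ?thesis using that[of "max K 0"] by simp
qed

lemma dual_bdd:
  assumes "f \<in> dual S N" shows "bdd_above ((\<lambda>x. \<bar>f x\<bar>) ` {x\<in>S. N x \<le> 1})"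
proof -
  obtain K where K: "K \<ge> 0" "\<And>x. x \<in> S \<Longrightarrow> \<bar>f x\<bar> \<le> K * N x" using dual_bound[OF assms] by blast
  have "\<bar>f x\<bar> \<le> K" if "x \<in> S" "N x \<le> 1" for x
    using K(2)[OF that(1)] mult_left_mono[OF that(2) K(1)] by simp
  then show ?thesis unfolding bdd_above_def by blast
qed

lemma dual_norm_ge:
  assumes "f \<in> dual S N" "x \<in> S" "N x \<le> 1" shows "\<bar>f x\<bar> \<le> dual_norm S N f"
  unfolding dual_norm_def using assms dual_bdd[OF assms(1)] by (intro cSup_upper) auto

lemma dual_norm_nonneg: "f \<in> dual S N \<Longrightarrow> dual_norm S N f \<ge> 0"
  using dual_norm_ge[of f 0] S0 N0 by force

lemma dual_norm_le:
  assumes "\<And>x. x \<in> S \<Longrightarrow> N x \<le> 1 \<Longrightarrow> \<bar>f x\<bar> \<le> C" shows "dual_norm S N f \<le> C"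
  unfolding dual_norm_def using assms S0 N0 by (intro cSup_least) auto

lemma dual_plus: "f \<in> dual S N \<Longrightarrow> g \<in> dual S N \<Longrightarrow> (\<lambda>x. f x + g x) \<in> dual S N"
proof -
  assume f: "f \<in> dual S N" and g: "g \<in> dual S N"
  obtain K where K: "\<And>x. x \<in> S \<Longrightarrow> \<bar>f x\<bar> \<le> K * N x" using dual_bound[OF f] by blast
  obtain L where L: "\<And>x. x \<in> S \<Longrightarrow> \<bar>g x\<bar> \<le> L * N x" using dual_bound[OF g] by blast
  show ?thesis
  proof (rule dualI[where K="K + L"])
    fix x assume "x \<in> S"
    then show "\<bar>f x + g x\<bar> \<le> (K + L) * N x" using K L by (smt (verit) distrib_right)
  qed (simp_all add: dual_add[OF f] dual_add[OF g] dual_scale[OF f] dual_scale[OF g] dual_out[OF f] dual_out[OF g] algebra_simps)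
qed

lemma dual_cmult: "f \<in> dual S N \<Longrightarrow> (\<lambda>x. c * f x) \<in> dual S N"
proof -
  assume f: "f \<in> dual S N"
  obtain K where K: "\<And>x. x \<in> S \<Longrightarrow> \<bar>f x\<bar> \<le> K * N x" using dual_bound[OF f] by blast
  show ?thesis
  proof (rule dualI[where K="\<bar>c\<bar> * K"])
    fix x assume "x \<in> S"
    then show "\<bar>c * f x\<bar> \<le> \<bar>c\<bar> * K * N x" using K by (simp add: abs_mult mult.assoc mult_left_mono)
  qed (simp_all add: dual_add[OF f] dual_scale[OF f] dual_out[OF f] algebra_simps)
qed

lemma dual_zero: "(\<lambda>x. 0) \<in> dual S N"
  by (rule dualI[where K=0]) auto

lemma bidual_add: "F \<in> bidual S N \<Longrightarrow> f \<in> dual S N \<Longrightarrow> g \<in> dual S N \<Longrightarrow> F (\<lambda>x. f x + g x) = F f + F g"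
  unfolding bidual_def by blast
lemma bidual_scale: "F \<in> bidual S N \<Longrightarrow> f \<in> dual S N \<Longrightarrow> F (\<lambda>x. c * f x) = c * F f"
  unfolding bidual_def by blast
lemma bidual_out: "F \<in> bidual S N \<Longrightarrow> f \<notin> dual S N \<Longrightarrow> F f = 0"
  unfolding bidual_def by blast
lemma bidual_zero_fun: "F \<in> bidual S N \<Longrightarrow> F (\<lambda>x. 0) = 0"
  using bidual_scale[of F "\<lambda>x. 0" 0] dual_zero by simp

lemma bidual_bound:
  assumes "F \<in> bidual S N" obtains K where "K \<ge> 0" "\<And>f. f \<in> dual S N \<Longrightarrow> \<bar>F f\<bar> \<le> K * dual_norm S N f"
proof -
  obtain K where K: "\<And>f. f \<in> dual S N \<Longrightarrow> \<bar>F f\<bar> \<le> K * dual_norm S N f" using assms unfolding bidual_def by blast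
  have "\<bar>F f\<bar> \<le> max K 0 * dual_norm S N f" if "f \<in> dual S N" for f
    using K[OF that] dual_norm_nonneg[OF that] by (smt (verit) mult_right_mono)
  then show ?thesis using that[of "max K 0"] by simp
qed

lemma bidualI:
  assumes "\<And>f g. f \<in> dual S N \<Longrightarrow> g \<in> dual S N \<Longrightarrow> F (\<lambda>x. f x + g x) = F f + F g"
    and "\<And>c f. f \<in> dual S N \<Longrightarrow> F (\<lambda>x. c * f x) = c * F f"
    and "\<And>f. f \<in> dual S N \<Longrightarrow> \<bar>F f\<bar> \<le> K * dual_norm S N f"
    and "\<And>f. f \<notin> dual S N \<Longrightarrow> F f = 0"
  shows "F \<in> bidual S N"
  using assms unfolding bidual_def by blast

lemma bidual_zero: "(\<lambda>f. 0) \<in> bidual S N"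
  by (rule bidualI[where K=0]) auto

lemma rmod_dual:
  assumes f: "f \<in> dual S N" and a: "a \<in> S"
  shows "rmod S M f a \<in> dual S N"
proof -
  obtain K where K: "K \<ge> 0" "\<And>x. x \<in> S \<Longrightarrow> \<bar>f x\<bar> \<le> K * N x" using dual_bound[OF f] by blast
  show ?thesis
  proof (rule dualI[where K="K * N a"])
    fix x y assume "x \<in> S" "y \<in> S"
    then show "rmod S M f a (x + y) = rmod S M f a x + rmod S M f a y"
      using a by (simp add: rmod_def Sadd add_right dual_add[OF f] Mclosed)
  next
    fix c x assume "x \<in> S"
    then show "rmod S M f a (c *\<^sub>R x) = c * rmod S M f a x"
      using a by (simp add: rmod_def Sscale scale_right dual_scale[OF f] Mclosed)
  next
    fix x assume x: "x \<in> S"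
    have "\<bar>f (M a x)\<bar> \<le> K * N (M a x)" using K(2) Mclosed[OF a x] by blast
    also have "\<dots> \<le> K * (N a * N x)" using Nmult[OF a x] K(1) by (rule mult_left_mono)
    finally show "\<bar>rmod S M f a x\<bar> \<le> K * N a * N x" using x by (simp add: rmod_def mult.assoc)
  qed (simp add: rmod_def)
qed

lemma rmod_norm:
  assumes f: "f \<in> dual S N" "K \<ge> 0" "\<And>x. x \<in> S \<Longrightarrow> \<bar>f x\<bar> \<le> K * N x" and a: "a \<in> S"
  shows "dual_norm S N (rmod S M f a) \<le> K * N a"
proof (rule dual_norm_le)
  fix x assume x: "x \<in> S" "N x \<le> 1"
  have "\<bar>f (M a x)\<bar> \<le> K * N (M a x)" using f(3) Mclosed[OF a x(1)] by blast
  also have "\<dots> \<le> K * (N a * N x)" using Nmult[OF a x(1)] f(2) by (rule mult_left_mono)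
  also have "\<dots> \<le> K * (N a * 1)" using x(2) f(2) N_nonneg[of a] by (intro mult_left_mono) (auto intro: mult_left_le)
  finally show "\<bar>rmod S M f a x\<bar> \<le> K * N a" using x by (simp add: rmod_def)
qed

lemma lmod_dual:
  assumes f: "f \<in> dual S N" and a: "a \<in> S"
  shows "lmod S M a f \<in> dual S N"
proof -
  obtain K where K: "K \<ge> 0" "\<And>x. x \<in> S \<Longrightarrow> \<bar>f x\<bar> \<le> K * N x" using dual_bound[OF f] by blast
  show ?thesis
  proof (rule dualI[where K="K * N a"])
    fix x y assume "x \<in> S" "y \<in> S"
    then show "lmod S M a f (x + y) = lmod S M a f x + lmod S M a f y"
      using a by (simp add: lmod_def Sadd add_left dual_add[OF f] Mclosed)
  next
    fix c x assume "x \<in> S"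
    then show "lmod S M a f (c *\<^sub>R x) = c * lmod S M a f x"
      using a by (simp add: lmod_def Sscale scale_left dual_scale[OF f] Mclosed)
  next
    fix x assume x: "x \<in> S"
    have "\<bar>f (M x a)\<bar> \<le> K * N (M x a)" using K(2) Mclosed[OF x a] by blast
    also have "\<dots> \<le> K * (N x * N a)" using Nmult[OF x a] K(1) by (rule mult_left_mono)
    finally show "\<bar>lmod S M a f x\<bar> \<le> K * N a * N x" using x by (simp add: lmod_def algebra_simps)
  qed (simp add: lmod_def)
qed

lemma lmod_norm:
  assumes f: "f \<in> dual S N" "K \<ge> 0" "\<And>x. x \<in> S \<Longrightarrow> \<bar>f x\<bar> \<le> K * N x" and a: "a \<in> S"
  shows "dual_norm S N (lmod S M a f) \<le> K * N a"
proof (rule dual_norm_le)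
  fix x assume x: "x \<in> S" "N x \<le> 1"
  have "\<bar>f (M x a)\<bar> \<le> K * N (M x a)" using f(3) Mclosed[OF x(1) a] by blast
  also have "\<dots> \<le> K * (N x * N a)" using Nmult[OF x(1) a] f(2) by (rule mult_left_mono)
  also have "\<dots> \<le> K * (1 * N a)" using x(2) f(2) N_nonneg[of a] by (intro mult_left_mono mult_right_mono) auto
  finally show "\<bar>lmod S M a f x\<bar> \<le> K * N a" using x by (simp add: lmod_def)
qed

lemma rmod_add: "f \<in> dual S N \<Longrightarrow> a \<in> S \<Longrightarrow> b \<in> S \<Longrightarrow>
   rmod S M f (a + b) = (\<lambda>x. rmod S M f a x + rmod S M f b x)"
  by (auto simp: rmod_def add_left dual_add Mclosed)
lemma rmod_scale: "f \<in> dual S N \<Longrightarrow> a \<in> S \<Longrightarrow>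
   rmod S M f (c *\<^sub>R a) = (\<lambda>x. c * rmod S M f a x)"
  by (auto simp: rmod_def scale_left dual_scale Mclosed)
lemma lmod_add: "f \<in> dual S N \<Longrightarrow> a \<in> S \<Longrightarrow> b \<in> S \<Longrightarrow>
   lmod S M (a + b) f = (\<lambda>x. lmod S M a f x + lmod S M b f x)"
  by (auto simp: lmod_def add_right dual_add Mclosed)
lemma lmod_scale: "f \<in> dual S N \<Longrightarrow> a \<in> S \<Longrightarrow>
   lmod S M (c *\<^sub>R a) f = (\<lambda>x. c * lmod S M a f x)"
  by (auto simp: lmod_def scale_right dual_scale Mclosed)

lemma Ff_dual:
  assumes G: "G \<in> bidual S N" and f: "f \<in> dual S N"
  shows "Ff S M G f \<in> dual S N"
proof -
  obtain K where K: "K \<ge> 0" "\<And>x. x \<in> S \<Longrightarrow> \<bar>f x\<bar> \<le> K * N x" using dual_bound[OF f] by blast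
  obtain L where L: "L \<ge> 0" "\<And>g. g \<in> dual S N \<Longrightarrow> \<bar>G g\<bar> \<le> L * dual_norm S N g" using bidual_bound[OF G] by blast
  show ?thesis
  proof (rule dualI[where K="L * K"])
    fix x y assume "x \<in> S" "y \<in> S"
    then show "Ff S M G f (x + y) = Ff S M G f x + Ff S M G f y"
      by (simp add: Ff_def Sadd rmod_add[OF f] bidual_add[OF G] rmod_dual[OF f])
  next
    fix c x assume "x \<in> S"
    then show "Ff S M G f (c *\<^sub>R x) = c * Ff S M G f x"
      by (simp add: Ff_def Sscale rmod_scale[OF f] bidual_scale[OF G] rmod_dual[OF f])
  next
    fix x assume x: "x \<in> S"
    have "\<bar>G (rmod S M f x)\<bar> \<le> L * dual_norm S N (rmod S M f x)" using L(2) rmod_dual[OF f x] by blast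
    also have "\<dots> \<le> L * (K * N x)" using rmod_norm[OF f K x] L(1) by (rule mult_left_mono)
    finally show "\<bar>Ff S M G f x\<bar> \<le> L * K * N x" using x by (simp add: Ff_def mult.assoc)
  qed (simp add: Ff_def)
qed

lemma fF_dual:
  assumes G: "G \<in> bidual S N" and f: "f \<in> dual S N"
  shows "fF S M f G \<in> dual S N"
proof -
  obtain K where K: "K \<ge> 0" "\<And>x. x \<in> S \<Longrightarrow> \<bar>f x\<bar> \<le> K * N x" using dual_bound[OF f] by blast
  obtain L where L: "L \<ge> 0" "\<And>g. g \<in> dual S N \<Longrightarrow> \<bar>G g\<bar> \<le> L * dual_norm S N g" using bidual_bound[OF G] by blast
  show ?thesis
  proof (rule dualI[where K="L * K"])
    fix x y assume "x \<in> S" "y \<in> S"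
    then show "fF S M f G (x + y) = fF S M f G x + fF S M f G y"
      by (simp add: fF_def Sadd lmod_add[OF f] bidual_add[OF G] lmod_dual[OF f])
  next
    fix c x assume "x \<in> S"
    then show "fF S M f G (c *\<^sub>R x) = c * fF S M f G x"
      by (simp add: fF_def Sscale lmod_scale[OF f] bidual_scale[OF G] lmod_dual[OF f])
  next
    fix x assume x: "x \<in> S"
    have "\<bar>G (lmod S M x f)\<bar> \<le> L * dual_norm S N (lmod S M x f)" using L(2) lmod_dual[OF f x] by blast
    also have "\<dots> \<le> L * (K * N x)" using lmod_norm[OF f K x] L(1) by (rule mult_left_mono)
    finally show "\<bar>fF S M f G x\<bar> \<le> L * K * N x" using x by (simp add: fF_def mult.assoc)
  qed (simp add: fF_def)
qed

end

lemma nalg_UNIV: "nalg (UNIV :: 'a::real_normed_algebra set) norm (*)"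
  by unfold_locales (auto simp: subspace_UNIV distrib_left distrib_right norm_mult_ineq)

lemma nalg_ideal:
  fixes I :: "'a::real_normed_algebra set"
  assumes "subspace I" "\<And>b i. i \<in> I \<Longrightarrow> b * i \<in> I"
  shows "nalg I norm (*)"
  using assms by unfold_locales (auto simp: distrib_left distrib_right norm_mult_ineq)



lemma memS[simp]: "p \<in> amalg_carrier I \<longleftrightarrow> snd p \<in> I"
  by (cases p) (simp add: amalg_carrier_def)

lemma amalg_mult_simp[simp]: "amalg_mult \<theta> (a, i) (a', i') = (a * a', \<theta> a * i' + i * \<theta> a' + i * i')"
  by (simp add: amalg_mult_def)

lemma amalg_norm_simp[simp]: "amalg_norm (a, i) = norm a + norm i"
  by (simp add: amalg_norm_def)

locale amalg =
  fixes \<theta> :: "'a::{real_normed_algebra,banach} \<Rightarrow> 'b::{real_normed_algebra,banach}"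
    and I :: "'b set"
  assumes hom_lin: "bounded_linear \<theta>"
    and hom_mult: "\<And>x y. \<theta> (x * y) = \<theta> x * \<theta> y"
    and hom_norm: "onorm \<theta> \<le> 1"
    and I_subspace: "subspace I"
    and I_left: "\<And>b i. i \<in> I \<Longrightarrow> b * i \<in> I"
    and I_right: "\<And>b i. i \<in> I \<Longrightarrow> i * b \<in> I"
begin

lemma th0[simp]: "\<theta> 0 = 0" using hom_lin by (simp add: linear_simps)
lemma thadd: "\<theta> (x + y) = \<theta> x + \<theta> y" using hom_lin by (simp add: linear_simps)
lemma thscale: "\<theta> (c *\<^sub>R x) = c *\<^sub>R \<theta> x" using hom_lin by (simp add: linear_simps)
lemma thnorm: "norm (\<theta> x) \<le> norm x"
proof -
  have "norm (\<theta> x) \<le> onorm \<theta> * norm x" using onorm[OF hom_lin] .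
  also have "\<dots> \<le> 1 * norm x" using hom_norm by (intro mult_right_mono) auto
  finally show ?thesis by simp
qed

lemma I0[simp]: "0 \<in> I" using I_subspace by (rule subspace_0)
lemma Iadd: "x \<in> I \<Longrightarrow> y \<in> I \<Longrightarrow> x + y \<in> I" using I_subspace by (rule subspace_add)
lemma Iscale: "x \<in> I \<Longrightarrow> c *\<^sub>R x \<in> I" using I_subspace by (rule subspace_mul)

sublocale AA: nalg "UNIV :: 'a set" norm "(*)" by (rule nalg_UNIV)
sublocale AB: nalg "UNIV :: 'b set" norm "(*)" by (rule nalg_UNIV)
sublocale AI: nalg I norm "(*)" by (rule nalg_ideal[OF I_subspace I_left])

sublocale AS: nalg "amalg_carrier I :: ('a \<times> 'b) set" amalg_norm "amalg_mult \<theta>"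
proof unfold_locales
  show "subspace (amalg_carrier I :: ('a \<times> 'b) set)"
    unfolding subspace_def by (auto simp: Iadd Iscale)
next
  fix x y :: "'a \<times> 'b" assume "x \<in> amalg_carrier I" "y \<in> amalg_carrier I"
  then show "amalg_mult \<theta> x y \<in> amalg_carrier I"
    by (cases x; cases y) (simp add: Iadd I_left I_right)
next
  fix x y z :: "'a \<times> 'b"
  show "amalg_mult \<theta> (x + y) z = amalg_mult \<theta> x z + amalg_mult \<theta> y z"
    by (cases x; cases y; cases z) (simp add: thadd distrib_left distrib_right)
  show "amalg_mult \<theta> x (y + z) = amalg_mult \<theta> x y + amalg_mult \<theta> x z"
    by (cases x; cases y; cases z) (simp add: thadd distrib_left distrib_right)
next
  fix c and x y :: "'a \<times> 'b"
  show "amalg_mult \<theta> (c *\<^sub>R x) y = c *\<^sub>R amalg_mult \<theta> x y"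
    by (cases x; cases y) (simp add: thscale scaleR_right_distrib)
  show "amalg_mult \<theta> x (c *\<^sub>R y) = c *\<^sub>R amalg_mult \<theta> x y"
    by (cases x; cases y) (simp add: thscale scaleR_right_distrib)
next
  fix x y :: "'a \<times> 'b"
  obtain a i where x: "x = (a, i)" by (cases x)
  obtain a' i' where y: "y = (a', i')" by (cases y)
  have "norm (\<theta> a * i' + i * \<theta> a' + i * i') \<le> norm a * norm i' + norm i * norm a' + norm i * norm i'"
  proof -
    have "norm (\<theta> a * i') \<le> norm a * norm i'"
      using order_trans[OF norm_mult_ineq mult_right_mono[OF thnorm]] by simp
    moreover have "norm (i * \<theta> a') \<le> norm i * norm a'"
      using order_trans[OF norm_mult_ineq mult_left_mono[OF thnorm]] by simp
    moreover have "norm (i * i') \<le> norm i * norm i'" by (rule norm_mult_ineq)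
    ultimately show ?thesis by (smt (verit) norm_triangle_ineq)
  qed
  moreover have "norm (a * a') \<le> norm a * norm a'" by (rule norm_mult_ineq)
  ultimately show "amalg_norm (amalg_mult \<theta> x y) \<le> amalg_norm x * amalg_norm y"
    unfolding x y by (simp add: algebra_simps)
qed (auto simp: amalg_norm_def)

abbreviation "SC \<equiv> amalg_carrier I :: ('a \<times> 'b) set"
abbreviation "MM \<equiv> amalg_mult \<theta>"
abbreviation "DS \<equiv> dual SC amalg_norm"
abbreviation "BS \<equiv> bidual SC amalg_norm"
abbreviation "DA \<equiv> dual (UNIV :: 'a set) norm"
abbreviation "BA \<equiv> bidual (UNIV :: 'a set) norm"
abbreviation "DB \<equiv> dual (UNIV :: 'b set) norm"
abbreviation "BB \<equiv> bidual (UNIV :: 'b set) norm"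
abbreviation "DI \<equiv> dual I norm"
abbreviation "BI \<equiv> bidual I norm"

definition pA :: "('a \<times> 'b \<Rightarrow> real) \<Rightarrow> 'a \<Rightarrow> real" where "pA \<Phi> = (\<lambda>a. \<Phi> (a, 0))"
definition pI :: "('a \<times> 'b \<Rightarrow> real) \<Rightarrow> 'b \<Rightarrow> real" where "pI \<Phi> = (\<lambda>i. if i \<in> I then \<Phi> (0, i) else 0)"
definition eA :: "('a \<Rightarrow> real) \<Rightarrow> 'a \<times> 'b \<Rightarrow> real" where "eA f = (\<lambda>p. if snd p \<in> I then f (fst p) else 0)"
definition eI :: "('b \<Rightarrow> real) \<Rightarrow> 'a \<times> 'b \<Rightarrow> real" where "eI f = (\<lambda>p. if snd p \<in> I then f (snd p) else 0)"
definition L where "L F G = (\<lambda>\<Phi>. if \<Phi> \<in> DS then F (pA \<Phi>) + G (pI \<Phi>) else 0)"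
definition PA where "PA X = (\<lambda>f. if f \<in> DA then X (eA f) else 0)"
definition PI where "PI X = (\<lambda>f. if f \<in> DI then X (eI f) else 0)"

lemma pA_dual: assumes "\<Phi> \<in> DS" shows "pA \<Phi> \<in> DA"
proof -
  obtain K where K: "\<And>x. x \<in> SC \<Longrightarrow> \<bar>\<Phi> x\<bar> \<le> K * amalg_norm x" using AS.dual_bound[OF assms] by blast
  show ?thesis
  proof (rule AA.dualI[where K=K])
    fix x y :: 'a show "pA \<Phi> (x + y) = pA \<Phi> x + pA \<Phi> y"
      using AS.dual_add[OF assms, of "(x,0)" "(y,0)"] by (simp add: pA_def)
  next
    fix c and x :: 'a show "pA \<Phi> (c *\<^sub>R x) = c * pA \<Phi> x"
      using AS.dual_scale[OF assms, of "(x,0)" c] by (simp add: pA_def)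
  next
    fix x :: 'a show "\<bar>pA \<Phi> x\<bar> \<le> K * norm x" using K[of "(x,0)"] by (simp add: pA_def)
  qed simp
qed

lemma pA_norm: assumes "\<Phi> \<in> DS" shows "dual_norm UNIV norm (pA \<Phi>) \<le> dual_norm SC amalg_norm \<Phi>"
  by (rule AA.dual_norm_le) (use AS.dual_norm_ge[OF assms] in \<open>simp add: pA_def\<close>)

lemma pI_dual: assumes "\<Phi> \<in> DS" shows "pI \<Phi> \<in> DI"
proof -
  obtain K where K: "\<And>x. x \<in> SC \<Longrightarrow> \<bar>\<Phi> x\<bar> \<le> K * amalg_norm x" using AS.dual_bound[OF assms] by blast
  show ?thesis
  proof (rule AI.dualI[where K=K])
    fix x y :: 'b assume "x \<in> I" "y \<in> I" then show "pI \<Phi> (x + y) = pI \<Phi> x + pI \<Phi> y"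
      using AS.dual_add[OF assms, of "(0,x)" "(0,y)"] by (simp add: pI_def Iadd)
  next
    fix c and x :: 'b assume "x \<in> I" then show "pI \<Phi> (c *\<^sub>R x) = c * pI \<Phi> x"
      using AS.dual_scale[OF assms, of "(0,x)" c] by (simp add: pI_def Iscale)
  next
    fix x :: 'b assume "x \<in> I" then show "\<bar>pI \<Phi> x\<bar> \<le> K * norm x" using K[of "(0,x)"] by (simp add: pI_def)
  qed (simp add: pI_def)
qed

lemma pI_norm: assumes "\<Phi> \<in> DS" shows "dual_norm I norm (pI \<Phi>) \<le> dual_norm SC amalg_norm \<Phi>"
  by (rule AI.dual_norm_le) (use AS.dual_norm_ge[OF assms] in \<open>simp add: pI_def\<close>)

lemma eA_dual: assumes "f \<in> DA" shows "eA f \<in> DS"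
proof -
  obtain K where K: "K \<ge> 0" "\<And>x. x \<in> UNIV \<Longrightarrow> \<bar>f x\<bar> \<le> K * norm x" using AA.dual_bound[OF assms] by blast
  show ?thesis
  proof (rule AS.dualI[where K=K])
    fix x y :: "'a \<times> 'b" assume "x \<in> SC" "y \<in> SC" then show "eA f (x + y) = eA f x + eA f y"
      using AA.dual_add[OF assms] by (simp add: eA_def Iadd)
  next
    fix c and x :: "'a \<times> 'b" assume "x \<in> SC" then show "eA f (c *\<^sub>R x) = c * eA f x"
      using AA.dual_scale[OF assms] by (simp add: eA_def Iscale)
  next
    fix x :: "'a \<times> 'b" assume "x \<in> SC"
    have "\<bar>f (fst x)\<bar> \<le> K * norm (fst x)" by (rule K(2)) simp
    also have "\<dots> \<le> K * amalg_norm x" using K(1) by (intro mult_left_mono) (auto simp: amalg_norm_def)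
    finally show "\<bar>eA f x\<bar> \<le> K * amalg_norm x" using \<open>x \<in> SC\<close> by (simp add: eA_def)
  qed (simp add: eA_def)
qed

lemma eA_norm: assumes "f \<in> DA" shows "dual_norm SC amalg_norm (eA f) \<le> dual_norm UNIV norm f"
proof (rule AS.dual_norm_le)
  fix x :: "'a \<times> 'b" assume "x \<in> SC" "amalg_norm x \<le> 1"
  then have "norm (fst x) \<le> 1" using norm_ge_zero[of "snd x"] unfolding amalg_norm_def by linarith
  then show "\<bar>eA f x\<bar> \<le> dual_norm UNIV norm f"
    using AA.dual_norm_ge[OF assms] AA.dual_norm_nonneg[OF assms] by (simp add: eA_def)
qed

lemma eI_dual: assumes "f \<in> DI" shows "eI f \<in> DS"
proof -
  obtain K where K: "K \<ge> 0" "\<And>x. x \<in> I \<Longrightarrow> \<bar>f x\<bar> \<le> K * norm x" using AI.dual_bound[OF assms] by blast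
  show ?thesis
  proof (rule AS.dualI[where K=K])
    fix x y :: "'a \<times> 'b" assume "x \<in> SC" "y \<in> SC" then show "eI f (x + y) = eI f x + eI f y"
      using AI.dual_add[OF assms] by (simp add: eI_def Iadd)
  next
    fix c and x :: "'a \<times> 'b" assume "x \<in> SC" then show "eI f (c *\<^sub>R x) = c * eI f x"
      using AI.dual_scale[OF assms] by (simp add: eI_def Iscale)
  next
    fix x :: "'a \<times> 'b" assume x: "x \<in> SC"
    have "\<bar>f (snd x)\<bar> \<le> K * norm (snd x)" using K(2) x by simp
    also have "\<dots> \<le> K * amalg_norm x" using K(1) by (intro mult_left_mono) (auto simp: amalg_norm_def)
    finally show "\<bar>eI f x\<bar> \<le> K * amalg_norm x" using x by (simp add: eI_def)
  qed (simp add: eI_def)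
qed

lemma eI_norm: assumes "f \<in> DI" shows "dual_norm SC amalg_norm (eI f) \<le> dual_norm I norm f"
proof (rule AS.dual_norm_le)
  fix x :: "'a \<times> 'b" assume "x \<in> SC" "amalg_norm x \<le> 1"
  then have "norm (snd x) \<le> 1" "snd x \<in> I" using norm_ge_zero[of "fst x"] unfolding amalg_norm_def by (linarith, simp)
  then show "\<bar>eI f x\<bar> \<le> dual_norm I norm f"
    using AI.dual_norm_ge[OF assms] by (simp add: eI_def)
qed

lemma pA_ea: "pA (eA f) = f" by (simp add: pA_def eA_def)
lemma pI_ea: "f \<in> DA \<Longrightarrow> pI (eA f) = (\<lambda>x. 0)" by (auto simp: pI_def eA_def fun_eq_iff AA.dual_0)
lemma pA_ei: "f \<in> DI \<Longrightarrow> pA (eI f) = (\<lambda>x. 0)" by (simp add: pA_def eI_def AI.dual_0)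
lemma pI_ei: "f \<in> DI \<Longrightarrow> pI (eI f) = f" by (auto simp: pI_def eI_def AI.dual_out)

lemma decomp: assumes "\<Phi> \<in> DS" shows "(\<lambda>p. eA (pA \<Phi>) p + eI (pI \<Phi>) p) = \<Phi>"
proof
  fix p :: "'a \<times> 'b"
  obtain a i where p: "p = (a, i)" by (cases p)
  show "eA (pA \<Phi>) p + eI (pI \<Phi>) p = \<Phi> p"
  proof (cases "i \<in> I")
    case True
    then show ?thesis using AS.dual_add[OF assms, of "(a,0)" "(0,i)"] by (simp add: p eA_def eI_def pA_def pI_def)
  next
    case False then show ?thesis using AS.dual_out[OF assms, of p] by (simp add: p eA_def eI_def)
  qed
qed

lemma L_bidual: assumes F: "F \<in> BA" and G: "G \<in> BI" shows "L F G \<in> BS"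
proof -
  obtain K1 where K1: "K1 \<ge> 0" "\<And>f. f \<in> DA \<Longrightarrow> \<bar>F f\<bar> \<le> K1 * dual_norm UNIV norm f" using AA.bidual_bound[OF F] by blast
  obtain K2 where K2: "K2 \<ge> 0" "\<And>f. f \<in> DI \<Longrightarrow> \<bar>G f\<bar> \<le> K2 * dual_norm I norm f" using AI.bidual_bound[OF G] by blast
  show ?thesis
  proof (rule AS.bidualI[where K="K1 + K2"])
    fix f g assume f: "f \<in> DS" and g: "g \<in> DS"
    have "pA (\<lambda>x. f x + g x) = (\<lambda>x. pA f x + pA g x)" "pI (\<lambda>x. f x + g x) = (\<lambda>x. pI f x + pI g x)"
      by (auto simp: pA_def pI_def)
    then show "L F G (\<lambda>x. f x + g x) = L F G f + L F G g"
      using f g AS.dual_plus[OF f g] by (simp add: L_def AA.bidual_add[OF F] AI.bidual_add[OF G] pA_dual pI_dual)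
  next
    fix c f assume f: "f \<in> DS"
    have "pA (\<lambda>x. c * f x) = (\<lambda>x. c * pA f x)" "pI (\<lambda>x. c * f x) = (\<lambda>x. c * pI f x)"
      by (auto simp: pA_def pI_def)
    then show "L F G (\<lambda>x. c * f x) = c * L F G f"
      using f AS.dual_cmult[OF f] by (simp add: L_def AA.bidual_scale[OF F] AI.bidual_scale[OF G] pA_dual pI_dual algebra_simps)
  next
    fix f assume f: "f \<in> DS"
    have "\<bar>F (pA f)\<bar> \<le> K1 * dual_norm SC amalg_norm f"
      using K1(2)[OF pA_dual[OF f]] mult_left_mono[OF pA_norm[OF f] K1(1)] by linarith
    moreover have "\<bar>G (pI f)\<bar> \<le> K2 * dual_norm SC amalg_norm f"
      using K2(2)[OF pI_dual[OF f]] mult_left_mono[OF pI_norm[OF f] K2(1)] by linarith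
    ultimately show "\<bar>L F G f\<bar> \<le> (K1 + K2) * dual_norm SC amalg_norm f"
      using f by (simp add: L_def distrib_right)
  qed (simp add: L_def)
qed

lemma PA_bidual: assumes X: "X \<in> BS" shows "PA X \<in> BA"
proof -
  obtain K where K: "K \<ge> 0" "\<And>f. f \<in> DS \<Longrightarrow> \<bar>X f\<bar> \<le> K * dual_norm SC amalg_norm f" using AS.bidual_bound[OF X] by blast
  show ?thesis
  proof (rule AA.bidualI[where K=K])
    fix f g assume f: "f \<in> DA" and g: "g \<in> DA"
    have "eA (\<lambda>x. f x + g x) = (\<lambda>x. eA f x + eA g x)" by (auto simp: eA_def)
    then show "PA X (\<lambda>x. f x + g x) = PA X f + PA X g"
      using f g AA.dual_plus[OF f g] by (simp add: PA_def AS.bidual_add[OF X] eA_dual)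
  next
    fix c f assume f: "f \<in> DA"
    have "eA (\<lambda>x. c * f x) = (\<lambda>x. c * eA f x)" by (auto simp: eA_def)
    then show "PA X (\<lambda>x. c * f x) = c * PA X f"
      using f AA.dual_cmult[OF f] by (simp add: PA_def AS.bidual_scale[OF X] eA_dual)
  next
    fix f assume f: "f \<in> DA"
    show "\<bar>PA X f\<bar> \<le> K * dual_norm UNIV norm f"
      using f K(2)[OF eA_dual[OF f]] mult_left_mono[OF eA_norm[OF f] K(1)] by (simp add: PA_def)
  qed (simp add: PA_def)
qed

lemma PI_bidual: assumes X: "X \<in> BS" shows "PI X \<in> BI"
proof -
  obtain K where K: "K \<ge> 0" "\<And>f. f \<in> DS \<Longrightarrow> \<bar>X f\<bar> \<le> K * dual_norm SC amalg_norm f" using AS.bidual_bound[OF X] by blast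
  show ?thesis
  proof (rule AI.bidualI[where K=K])
    fix f g assume f: "f \<in> DI" and g: "g \<in> DI"
    have "eI (\<lambda>x. f x + g x) = (\<lambda>x. eI f x + eI g x)" by (auto simp: eI_def)
    then show "PI X (\<lambda>x. f x + g x) = PI X f + PI X g"
      using f g AI.dual_plus[OF f g] by (simp add: PI_def AS.bidual_add[OF X] eI_dual)
  next
    fix c f assume f: "f \<in> DI"
    have "eI (\<lambda>x. c * f x) = (\<lambda>x. c * eI f x)" by (auto simp: eI_def)
    then show "PI X (\<lambda>x. c * f x) = c * PI X f"
      using f AI.dual_cmult[OF f] by (simp add: PI_def AS.bidual_scale[OF X] eI_dual)
  next
    fix f assume f: "f \<in> DI"
    show "\<bar>PI X f\<bar> \<le> K * dual_norm I norm f"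
      using f K(2)[OF eI_dual[OF f]] mult_left_mono[OF eI_norm[OF f] K(1)] by (simp add: PI_def)
  qed (simp add: PI_def)
qed

lemma X_decomp: assumes X: "X \<in> BS" shows "L (PA X) (PI X) = X"
proof
  fix \<Phi> show "L (PA X) (PI X) \<Phi> = X \<Phi>"
  proof (cases "\<Phi> \<in> DS")
    case True
    have "L (PA X) (PI X) \<Phi> = X (eA (pA \<Phi>)) + X (eI (pI \<Phi>))"
      using True by (simp add: L_def PA_def PI_def pA_dual pI_dual)
    also have "\<dots> = X (\<lambda>p. eA (pA \<Phi>) p + eI (pI \<Phi>) p)"
      using True by (simp add: AS.bidual_add[OF X] eA_dual eI_dual pA_dual pI_dual)
    also have "\<dots> = X \<Phi>" using decomp[OF True] by simp
    finally show ?thesis .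
  next
    case False then show ?thesis using AS.bidual_out[OF X False] by (simp add: L_def)
  qed
qed

end

context amalg begin

lemma PF1: assumes F': "F' \<in> BA" and G': "G' \<in> BI" and \<Phi>: "\<Phi> \<in> DS"
  shows "pA (Ff SC MM (L F' G') \<Phi>) = (\<lambda>a. Ff UNIV (*) F' (pA \<Phi>) a + G' (\<lambda>i'. if i' \<in> I then \<Phi> (0, \<theta> a * i') else 0))"
proof
  fix a :: 'a
  have r: "rmod SC MM \<Phi> (a,0) \<in> DS" by (rule AS.rmod_dual[OF \<Phi>]) simp
  have e1: "pA (rmod SC MM \<Phi> (a,0)) = rmod UNIV (*) (pA \<Phi>) a" by (simp add: pA_def rmod_def fun_eq_iff)
  have e2: "pI (rmod SC MM \<Phi> (a,0)) = (\<lambda>i'. if i' \<in> I then \<Phi> (0, \<theta> a * i') else 0)"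
    by (simp add: pI_def rmod_def fun_eq_iff)
  have "pA (Ff SC MM (L F' G') \<Phi>) a = L F' G' (rmod SC MM \<Phi> (a,0))" by (simp add: pA_def Ff_def)
  also have "\<dots> = F' (pA (rmod SC MM \<Phi> (a,0))) + G' (pI (rmod SC MM \<Phi> (a,0)))" using r by (simp add: L_def)
  also have "\<dots> = Ff UNIV (*) F' (pA \<Phi>) a + G' (\<lambda>i'. if i' \<in> I then \<Phi> (0, \<theta> a * i') else 0)"
    by (simp add: e1 e2 Ff_def)
  finally show "pA (Ff SC MM (L F' G') \<Phi>) a = Ff UNIV (*) F' (pA \<Phi>) a + G' (\<lambda>i'. if i' \<in> I then \<Phi> (0, \<theta> a * i') else 0)" .
qed

lemma PF2: assumes F': "F' \<in> BA" and G': "G' \<in> BI" and \<Phi>: "\<Phi> \<in> DS"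
  shows "pI (Ff SC MM (L F' G') \<Phi>) = (\<lambda>i. (if i \<in> I then F' (\<lambda>a'. \<Phi> (0, i * \<theta> a')) else 0) + Ff I (*) G' (pI \<Phi>) i)"
proof
  fix i :: 'b
  show "pI (Ff SC MM (L F' G') \<Phi>) i = (if i \<in> I then F' (\<lambda>a'. \<Phi> (0, i * \<theta> a')) else 0) + Ff I (*) G' (pI \<Phi>) i"
  proof (cases "i \<in> I")
    case True
    have r: "rmod SC MM \<Phi> (0,i) \<in> DS" by (rule AS.rmod_dual[OF \<Phi>]) (simp add: True)
    have e1: "pA (rmod SC MM \<Phi> (0,i)) = (\<lambda>a'. \<Phi> (0, i * \<theta> a'))" by (simp add: pA_def rmod_def fun_eq_iff True)
    have e2: "pI (rmod SC MM \<Phi> (0,i)) = rmod I (*) (pI \<Phi>) i"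
      by (simp add: pI_def rmod_def fun_eq_iff I_left)
    have "pI (Ff SC MM (L F' G') \<Phi>) i = L F' G' (rmod SC MM \<Phi> (0,i))" using True by (simp add: pI_def Ff_def)
    also have "\<dots> = F' (pA (rmod SC MM \<Phi> (0,i))) + G' (pI (rmod SC MM \<Phi> (0,i)))" using r by (simp add: L_def)
    also have "\<dots> = (if i \<in> I then F' (\<lambda>a'. \<Phi> (0, i * \<theta> a')) else 0) + Ff I (*) G' (pI \<Phi>) i"
      using True by (simp add: e1 e2 Ff_def)
    finally show ?thesis .
  next
    case False then show ?thesis by (simp add: pI_def Ff_def)
  qed
qed

lemma PF3: assumes F: "F \<in> BA" and G: "G \<in> BI" and \<Phi>: "\<Phi> \<in> DS"
  shows "pA (fF SC MM \<Phi> (L F G)) = (\<lambda>a'. fF UNIV (*) (pA \<Phi>) F a' + G (\<lambda>i. if i \<in> I then \<Phi> (0, i * \<theta> a') else 0))"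
proof
  fix a' :: 'a
  have r: "lmod SC MM (a',0) \<Phi> \<in> DS" by (rule AS.lmod_dual[OF \<Phi>]) simp
  have e1: "pA (lmod SC MM (a',0) \<Phi>) = lmod UNIV (*) a' (pA \<Phi>)" by (simp add: pA_def lmod_def fun_eq_iff)
  have e2: "pI (lmod SC MM (a',0) \<Phi>) = (\<lambda>i. if i \<in> I then \<Phi> (0, i * \<theta> a') else 0)"
    by (simp add: pI_def lmod_def fun_eq_iff)
  have "pA (fF SC MM \<Phi> (L F G)) a' = L F G (lmod SC MM (a',0) \<Phi>)" by (simp add: pA_def fF_def)
  also have "\<dots> = F (pA (lmod SC MM (a',0) \<Phi>)) + G (pI (lmod SC MM (a',0) \<Phi>))" using r by (simp add: L_def)
  also have "\<dots> = fF UNIV (*) (pA \<Phi>) F a' + G (\<lambda>i. if i \<in> I then \<Phi> (0, i * \<theta> a') else 0)"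
    by (simp add: e1 e2 fF_def)
  finally show "pA (fF SC MM \<Phi> (L F G)) a' = fF UNIV (*) (pA \<Phi>) F a' + G (\<lambda>i. if i \<in> I then \<Phi> (0, i * \<theta> a') else 0)" .
qed

lemma PF4: assumes F: "F \<in> BA" and G: "G \<in> BI" and \<Phi>: "\<Phi> \<in> DS"
  shows "pI (fF SC MM \<Phi> (L F G)) = (\<lambda>i'. (if i' \<in> I then F (\<lambda>a. \<Phi> (0, \<theta> a * i')) else 0) + fF I (*) (pI \<Phi>) G i')"
proof
  fix i' :: 'b
  show "pI (fF SC MM \<Phi> (L F G)) i' = (if i' \<in> I then F (\<lambda>a. \<Phi> (0, \<theta> a * i')) else 0) + fF I (*) (pI \<Phi>) G i'"
  proof (cases "i' \<in> I")
    case True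
    have r: "lmod SC MM (0,i') \<Phi> \<in> DS" by (rule AS.lmod_dual[OF \<Phi>]) (simp add: True)
    have e1: "pA (lmod SC MM (0,i') \<Phi>) = (\<lambda>a. \<Phi> (0, \<theta> a * i'))" by (simp add: pA_def lmod_def fun_eq_iff True)
    have e2: "pI (lmod SC MM (0,i') \<Phi>) = lmod I (*) i' (pI \<Phi>)"
      by (simp add: pI_def lmod_def fun_eq_iff I_right)
    have "pI (fF SC MM \<Phi> (L F G)) i' = L F G (lmod SC MM (0,i') \<Phi>)" using True by (simp add: pI_def fF_def)
    also have "\<dots> = F (pA (lmod SC MM (0,i') \<Phi>)) + G (pI (lmod SC MM (0,i') \<Phi>))" using r by (simp add: L_def)
    also have "\<dots> = (if i' \<in> I then F (\<lambda>a. \<Phi> (0, \<theta> a * i')) else 0) + fF I (*) (pI \<Phi>) G i'"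
      using True by (simp add: e1 e2 fF_def)
    finally show ?thesis .
  next
    case False then show ?thesis by (simp add: pI_def fF_def)
  qed
qed


lemma Ff_zero: "Ff S M (\<lambda>f. 0) g = (\<lambda>x. 0)" by (simp add: Ff_def fun_eq_iff)
lemma fF_zero: "fF S M g (\<lambda>f. 0) = (\<lambda>x. 0)" by (simp add: fF_def fun_eq_iff)

lemma box_exp: assumes F: "F \<in> BA" and F': "F' \<in> BA" and G: "G \<in> BI" and G': "G' \<in> BI" and \<Phi>: "\<Phi> \<in> DS"
  shows "arens_box SC amalg_norm MM (L F G) (L F' G') \<Phi> =
     arens_box UNIV norm (*) F F' (pA \<Phi>) + F (\<lambda>a. G' (\<lambda>i'. if i' \<in> I then \<Phi> (0, \<theta> a * i') else 0))
   + G (\<lambda>i. if i \<in> I then F' (\<lambda>a'. \<Phi> (0, i * \<theta> a')) else 0) + arens_box I norm (*) G G' (pI \<Phi>)"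
proof -
  define \<Psi> where "\<Psi> = Ff SC MM (L F' G') \<Phi>"
  have \<Psi>: "\<Psi> \<in> DS" unfolding \<Psi>_def by (rule AS.Ff_dual[OF L_bidual[OF F' G'] \<Phi>])
  define X1 where "X1 = Ff UNIV (*) F' (pA \<Phi>)"
  define X2 where "X2 = (\<lambda>a. G' (\<lambda>i'. if i' \<in> I then \<Phi> (0, \<theta> a * i') else 0))"
  define Y1 where "Y1 = (\<lambda>i. if i \<in> I then F' (\<lambda>a'. \<Phi> (0, i * \<theta> a')) else 0)"
  define Y2 where "Y2 = Ff I (*) G' (pI \<Phi>)"
  have X1: "X1 \<in> DA" unfolding X1_def by (rule AA.Ff_dual[OF F' pA_dual[OF \<Phi>]])
  have "X2 = pA (Ff SC MM (L (\<lambda>f. 0) G') \<Phi>)"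
    using PF1[OF AA.bidual_zero G' \<Phi>] by (simp add: X2_def Ff_zero)
  hence X2: "X2 \<in> DA" using pA_dual AS.Ff_dual[OF L_bidual[OF AA.bidual_zero G'] \<Phi>] by simp
  have Y2: "Y2 \<in> DI" unfolding Y2_def by (rule AI.Ff_dual[OF G' pI_dual[OF \<Phi>]])
  have "Y1 = pI (Ff SC MM (L F' (\<lambda>f. 0)) \<Phi>)"
    using PF2[OF F' AI.bidual_zero \<Phi>] by (simp add: Y1_def Ff_zero)
  hence Y1: "Y1 \<in> DI" using pI_dual AS.Ff_dual[OF L_bidual[OF F' AI.bidual_zero] \<Phi>] by simp
  have "arens_box SC amalg_norm MM (L F G) (L F' G') \<Phi> = L F G \<Psi>"
    using \<Phi> by (simp add: arens_box_def \<Psi>_def)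
  also have "\<dots> = F (pA \<Psi>) + G (pI \<Psi>)" using \<Psi> by (simp add: L_def)
  also have "pA \<Psi> = (\<lambda>a. X1 a + X2 a)" unfolding \<Psi>_def PF1[OF F' G' \<Phi>] X1_def X2_def ..
  also have "pI \<Psi> = (\<lambda>i. Y1 i + Y2 i)" unfolding \<Psi>_def PF2[OF F' G' \<Phi>] Y1_def Y2_def ..
  also have "F (\<lambda>a. X1 a + X2 a) = F X1 + F X2" by (rule AA.bidual_add[OF F X1 X2])
  also have "G (\<lambda>i. Y1 i + Y2 i) = G Y1 + G Y2" by (rule AI.bidual_add[OF G Y1 Y2])
  finally show ?thesis using pA_dual[OF \<Phi>] pI_dual[OF \<Phi>]
    by (simp add: arens_box_def X1_def X2_def Y1_def Y2_def)
qed

lemma diamond_exp: assumes F: "F \<in> BA" and F': "F' \<in> BA" and G: "G \<in> BI" and G': "G' \<in> BI" and \<Phi>: "\<Phi> \<in> DS"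
  shows "arens_diamond SC amalg_norm MM (L F G) (L F' G') \<Phi> =
     arens_diamond UNIV norm (*) F F' (pA \<Phi>) + F' (\<lambda>a'. G (\<lambda>i. if i \<in> I then \<Phi> (0, i * \<theta> a') else 0))
   + G' (\<lambda>i'. if i' \<in> I then F (\<lambda>a. \<Phi> (0, \<theta> a * i')) else 0) + arens_diamond I norm (*) G G' (pI \<Phi>)"
proof -
  define \<Omega> where "\<Omega> = fF SC MM \<Phi> (L F G)"
  have \<Omega>: "\<Omega> \<in> DS" unfolding \<Omega>_def by (rule AS.fF_dual[OF L_bidual[OF F G] \<Phi>])
  define X1 where "X1 = fF UNIV (*) (pA \<Phi>) F"
  define X2 where "X2 = (\<lambda>a'. G (\<lambda>i. if i \<in> I then \<Phi> (0, i * \<theta> a') else 0))"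
  define Y1 where "Y1 = (\<lambda>i'. if i' \<in> I then F (\<lambda>a. \<Phi> (0, \<theta> a * i')) else 0)"
  define Y2 where "Y2 = fF I (*) (pI \<Phi>) G"
  have X1: "X1 \<in> DA" unfolding X1_def by (rule AA.fF_dual[OF F pA_dual[OF \<Phi>]])
  have "X2 = pA (fF SC MM \<Phi> (L (\<lambda>f. 0) G))"
    using PF3[OF AA.bidual_zero G \<Phi>] by (simp add: X2_def fF_zero)
  hence X2: "X2 \<in> DA" using pA_dual AS.fF_dual[OF L_bidual[OF AA.bidual_zero G] \<Phi>] by simp
  have Y2: "Y2 \<in> DI" unfolding Y2_def by (rule AI.fF_dual[OF G pI_dual[OF \<Phi>]])
  have "Y1 = pI (fF SC MM \<Phi> (L F (\<lambda>f. 0)))"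
    using PF4[OF F AI.bidual_zero \<Phi>] by (simp add: Y1_def fF_zero)
  hence Y1: "Y1 \<in> DI" using pI_dual AS.fF_dual[OF L_bidual[OF F AI.bidual_zero] \<Phi>] by simp
  have "arens_diamond SC amalg_norm MM (L F G) (L F' G') \<Phi> = L F' G' \<Omega>"
    using \<Phi> by (simp add: arens_diamond_def \<Omega>_def)
  also have "\<dots> = F' (pA \<Omega>) + G' (pI \<Omega>)" using \<Omega> by (simp add: L_def)
  also have "pA \<Omega> = (\<lambda>a. X1 a + X2 a)" unfolding \<Omega>_def PF3[OF F G \<Phi>] X1_def X2_def ..
  also have "pI \<Omega> = (\<lambda>i. Y1 i + Y2 i)" unfolding \<Omega>_def PF4[OF F G \<Phi>] Y1_def Y2_def ..
  also have "F' (\<lambda>a. X1 a + X2 a) = F' X1 + F' X2" by (rule AA.bidual_add[OF F' X1 X2])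
  also have "G' (\<lambda>i. Y1 i + Y2 i) = G' Y1 + G' Y2" by (rule AI.bidual_add[OF G' Y1 Y2])
  finally show ?thesis using pA_dual[OF \<Phi>] pI_dual[OF \<Phi>]
    by (simp add: arens_diamond_def X1_def X2_def Y1_def Y2_def)
qed


definition restr :: "('b \<Rightarrow> real) \<Rightarrow> 'b \<Rightarrow> real" where "restr g = (\<lambda>x. if x \<in> I then g x else 0)"

lemma comp_dual: assumes g: "g \<in> DB" shows "(\<lambda>a. g (\<theta> a)) \<in> DA"
proof -
  obtain K where K: "K \<ge> 0" "\<And>x. x \<in> UNIV \<Longrightarrow> \<bar>g x\<bar> \<le> K * norm x" using AB.dual_bound[OF g] by blast
  show ?thesis
  proof (rule AA.dualI[where K=K])
    fix x :: 'a
    have "\<bar>g (\<theta> x)\<bar> \<le> K * norm (\<theta> x)" using K(2) by simp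
    also have "\<dots> \<le> K * norm x" using thnorm K(1) by (rule mult_left_mono)
    finally show "\<bar>g (\<theta> x)\<bar> \<le> K * norm x" .
  qed (simp_all add: thadd thscale AB.dual_add[OF g] AB.dual_scale[OF g])
qed

lemma comp_norm: assumes g: "g \<in> DB" shows "dual_norm UNIV norm (\<lambda>a. g (\<theta> a)) \<le> dual_norm UNIV norm g"
proof (rule AA.dual_norm_le)
  fix x :: 'a assume "x \<in> UNIV" "norm x \<le> 1"
  then have "norm (\<theta> x) \<le> 1" using thnorm[of x] by linarith
  then show "\<bar>g (\<theta> x)\<bar> \<le> dual_norm UNIV norm g" using AB.dual_norm_ge[OF g, of "\<theta> x"] by simp
qed

lemma restr_dual: assumes g: "g \<in> DB" shows "restr g \<in> DI"
proof -
  obtain K where K: "K \<ge> 0" "\<And>x. x \<in> UNIV \<Longrightarrow> \<bar>g x\<bar> \<le> K * norm x" using AB.dual_bound[OF g] by blast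
  show ?thesis
  proof (rule AI.dualI[where K=K])
    fix x y assume "x \<in> I" "y \<in> I"
    then show "restr g (x + y) = restr g x + restr g y"
      using AB.dual_add[OF g, of x y] by (simp add: restr_def Iadd)
  next
    fix c x assume "x \<in> I"
    then show "restr g (c *\<^sub>R x) = c * restr g x"
      using AB.dual_scale[OF g, of x c] by (simp add: restr_def Iscale)
  next
    fix x assume "x \<in> I"
    then show "\<bar>restr g x\<bar> \<le> K * norm x" using K(2)[of x] by (simp add: restr_def)
  next
    fix x assume "x \<notin> I"
    then show "restr g x = 0" by (simp add: restr_def)
  qed
qed

lemma restr_norm: assumes g: "g \<in> DB" shows "dual_norm I norm (restr g) \<le> dual_norm UNIV norm g"
  by (rule AI.dual_norm_le) (use AB.dual_norm_ge[OF g] in \<open>simp add: restr_def\<close>)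

lemma sa_bidual: assumes F: "F \<in> BA" shows "second_adjoint \<theta> F \<in> BB"
proof -
  obtain K where K: "K \<ge> 0" "\<And>f. f \<in> DA \<Longrightarrow> \<bar>F f\<bar> \<le> K * dual_norm UNIV norm f" using AA.bidual_bound[OF F] by blast
  show ?thesis
  proof (rule AB.bidualI[where K=K])
    fix f g assume f: "f \<in> DB" and g: "g \<in> DB"
    show "second_adjoint \<theta> F (\<lambda>x. f x + g x) = second_adjoint \<theta> F f + second_adjoint \<theta> F g"
      using f g AB.dual_plus[OF f g] AA.bidual_add[OF F comp_dual[OF f] comp_dual[OF g]]
      by (simp add: second_adjoint_def)
  next
    fix c f assume f: "f \<in> DB"
    show "second_adjoint \<theta> F (\<lambda>x. c * f x) = c * second_adjoint \<theta> F f"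
      using f AB.dual_cmult[OF f] AA.bidual_scale[OF F comp_dual[OF f]]
      by (simp add: second_adjoint_def)
  next
    fix f assume f: "f \<in> DB"
    show "\<bar>second_adjoint \<theta> F f\<bar> \<le> K * dual_norm UNIV norm f"
      using f K(2)[OF comp_dual[OF f]] mult_left_mono[OF comp_norm[OF f] K(1)]
      by (simp add: second_adjoint_def)
  qed (simp add: second_adjoint_def)
qed

lemma ib_bidual: assumes G: "G \<in> BI" shows "incl_bidual I G \<in> BB"
proof -
  obtain K where K: "K \<ge> 0" "\<And>f. f \<in> DI \<Longrightarrow> \<bar>G f\<bar> \<le> K * dual_norm I norm f" using AI.bidual_bound[OF G] by blast
  have r: "(\<lambda>x. if x \<in> I then g x else 0) = restr g" for g by (simp add: restr_def)
  show ?thesis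
  proof (rule AB.bidualI[where K=K])
    fix f g assume f: "f \<in> DB" and g: "g \<in> DB"
    have "restr (\<lambda>x. f x + g x) = (\<lambda>x. restr f x + restr g x)" by (auto simp: restr_def)
    then show "incl_bidual I G (\<lambda>x. f x + g x) = incl_bidual I G f + incl_bidual I G g"
      using f g AB.dual_plus[OF f g] AI.bidual_add[OF G restr_dual[OF f] restr_dual[OF g]]
      by (simp add: incl_bidual_def r)
  next
    fix c f assume f: "f \<in> DB"
    have "restr (\<lambda>x. c * f x) = (\<lambda>x. c * restr f x)" by (auto simp: restr_def)
    then show "incl_bidual I G (\<lambda>x. c * f x) = c * incl_bidual I G f"
      using f AB.dual_cmult[OF f] AI.bidual_scale[OF G restr_dual[OF f]]
      by (simp add: incl_bidual_def r)
  next
    fix f assume f: "f \<in> DB"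
    show "\<bar>incl_bidual I G f\<bar> \<le> K * dual_norm UNIV norm f"
      using f K(2)[OF restr_dual[OF f]] mult_left_mono[OF restr_norm[OF f] K(1)]
      by (simp add: incl_bidual_def r)
  qed (simp add: incl_bidual_def)
qed

lemma ib_apply: "g \<in> DB \<Longrightarrow> incl_bidual I G g = G (restr g)"
  by (simp add: incl_bidual_def restr_def)
lemma sa_apply: "g \<in> DB \<Longrightarrow> second_adjoint \<theta> F g = F (\<lambda>a. g (\<theta> a))"
  by (simp add: second_adjoint_def)

context
  fixes F G g \<Phi>
  assumes F: "F \<in> BA" and G: "G \<in> BI" and g: "g \<in> DB" and \<Phi>: "\<Phi> \<in> DS"
    and hg: "\<And>i. i \<in> I \<Longrightarrow> g i = \<Phi> (0, i)"
begin

lemma C1: "arens_box UNIV norm (*) (second_adjoint \<theta> F) (incl_bidual I G) g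
   = F (\<lambda>a. G (\<lambda>i'. if i' \<in> I then \<Phi> (0, \<theta> a * i') else 0))"
proof -
  have d: "Ff UNIV (*) (incl_bidual I G) g \<in> DB" by (rule AB.Ff_dual[OF ib_bidual[OF G] g])
  have "arens_box UNIV norm (*) (second_adjoint \<theta> F) (incl_bidual I G) g
      = F (\<lambda>a. Ff UNIV (*) (incl_bidual I G) g (\<theta> a))"
    using g d by (simp add: arens_box_def sa_apply)
  also have "(\<lambda>a. Ff UNIV (*) (incl_bidual I G) g (\<theta> a)) = (\<lambda>a. G (restr (rmod UNIV (*) g (\<theta> a))))"
    using AB.rmod_dual[OF g] by (simp add: Ff_def ib_apply)
  also have "(\<lambda>a. restr (rmod UNIV (*) g (\<theta> a))) = (\<lambda>a i'. if i' \<in> I then \<Phi> (0, \<theta> a * i') else 0)"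
    by (auto simp: restr_def rmod_def fun_eq_iff hg I_left)
  finally show ?thesis by (simp add: fun_eq_iff)
qed

lemma C2: "arens_diamond UNIV norm (*) (second_adjoint \<theta> F) (incl_bidual I G) g
   = G (\<lambda>i'. if i' \<in> I then F (\<lambda>a. \<Phi> (0, \<theta> a * i')) else 0)"
proof -
  have d: "fF UNIV (*) g (second_adjoint \<theta> F) \<in> DB" by (rule AB.fF_dual[OF sa_bidual[OF F] g])
  have "arens_diamond UNIV norm (*) (second_adjoint \<theta> F) (incl_bidual I G) g
      = G (restr (fF UNIV (*) g (second_adjoint \<theta> F)))"
    using g d by (simp add: arens_diamond_def ib_apply)
  also have "restr (fF UNIV (*) g (second_adjoint \<theta> F)) = (\<lambda>i'. if i' \<in> I then F (\<lambda>a. \<Phi> (0, \<theta> a * i')) else 0)"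
    using AB.lmod_dual[OF g] by (auto simp: restr_def fF_def sa_apply lmod_def fun_eq_iff hg I_left)
  finally show ?thesis .
qed

lemma C3: "arens_box UNIV norm (*) (incl_bidual I G) (second_adjoint \<theta> F) g
   = G (\<lambda>i. if i \<in> I then F (\<lambda>a'. \<Phi> (0, i * \<theta> a')) else 0)"
proof -
  have d: "Ff UNIV (*) (second_adjoint \<theta> F) g \<in> DB" by (rule AB.Ff_dual[OF sa_bidual[OF F] g])
  have "arens_box UNIV norm (*) (incl_bidual I G) (second_adjoint \<theta> F) g
      = G (restr (Ff UNIV (*) (second_adjoint \<theta> F) g))"
    using g d by (simp add: arens_box_def ib_apply)
  also have "restr (Ff UNIV (*) (second_adjoint \<theta> F) g) = (\<lambda>i. if i \<in> I then F (\<lambda>a'. \<Phi> (0, i * \<theta> a')) else 0)"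
    using AB.rmod_dual[OF g] by (auto simp: restr_def Ff_def sa_apply rmod_def fun_eq_iff hg I_right)
  finally show ?thesis .
qed

lemma C4: "arens_diamond UNIV norm (*) (incl_bidual I G) (second_adjoint \<theta> F) g
   = F (\<lambda>a'. G (\<lambda>i. if i \<in> I then \<Phi> (0, i * \<theta> a') else 0))"
proof -
  have d: "fF UNIV (*) g (incl_bidual I G) \<in> DB" by (rule AB.fF_dual[OF ib_bidual[OF G] g])
  have "arens_diamond UNIV norm (*) (incl_bidual I G) (second_adjoint \<theta> F) g
      = F (\<lambda>a'. fF UNIV (*) g (incl_bidual I G) (\<theta> a'))"
    using g d by (simp add: arens_diamond_def sa_apply)
  also have "(\<lambda>a'. fF UNIV (*) g (incl_bidual I G) (\<theta> a')) = (\<lambda>a'. G (restr (lmod UNIV (*) (\<theta> a') g)))"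
    using AB.lmod_dual[OF g] by (simp add: fF_def ib_apply)
  also have "(\<lambda>a'. restr (lmod UNIV (*) (\<theta> a') g)) = (\<lambda>a' i. if i \<in> I then \<Phi> (0, i * \<theta> a') else 0)"
    by (auto simp: restr_def lmod_def fun_eq_iff hg I_right)
  finally show ?thesis by (simp add: fun_eq_iff)
qed

end


lemma ext_g: assumes \<Phi>: "\<Phi> \<in> DS"
  obtains g where "g \<in> DB" "\<And>i. i \<in> I \<Longrightarrow> g i = \<Phi> (0, i)"
proof -
  have p: "pI \<Phi> \<in> DI" by (rule pI_dual[OF \<Phi>])
  obtain K where K: "K \<ge> 0" "\<And>x. x \<in> I \<Longrightarrow> \<bar>pI \<Phi> x\<bar> \<le> K * norm x" using AI.dual_bound[OF p] by blast
  have lin: "lin_on I (pI \<Phi>)" using p unfolding dual_def by blast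
  obtain g where g: "lin_on UNIV g" "\<And>x. \<bar>g x\<bar> \<le> K * norm x" "\<And>x. x \<in> I \<Longrightarrow> g x = pI \<Phi> x"
    using hahn_banach_norm[OF I_subspace lin _ K(1)] K(2) by blast
  have "g \<in> DB" using g(1,2) unfolding dual_def by blast
  moreover have "g i = \<Phi> (0, i)" if "i \<in> I" for i using g(3)[OF that] that by (simp add: pI_def)
  ultimately show ?thesis using that by blast
qed

lemma restr_eI: assumes g: "g \<in> DB" shows "eI (restr g) \<in> DS" "\<And>i. i \<in> I \<Longrightarrow> g i = eI (restr g) (0, i)"
  using eI_dual[OF restr_dual[OF g]] by (auto simp: eI_def restr_def)

theorem main:
  "arens_regular SC amalg_norm MM \<longleftrightarrow>
           arens_regular (UNIV :: 'a set) norm (*)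
         \<and> arens_regular I norm (*)
         \<and> (\<forall>F \<in> second_adjoint \<theta> ` BA.
              \<forall>G \<in> incl_bidual I ` BI.
                arens_box (UNIV :: 'b set) norm (*) F G = arens_diamond (UNIV :: 'b set) norm (*) F G
              \<and> arens_box (UNIV :: 'b set) norm (*) G F = arens_diamond (UNIV :: 'b set) norm (*) G F)"
proof
  assume R: "arens_regular SC amalg_norm MM"
  have RS: "arens_box SC amalg_norm MM X Y \<Phi> = arens_diamond SC amalg_norm MM X Y \<Phi>" if "X \<in> BS" "Y \<in> BS" for X Y \<Phi>
    using R that unfolding arens_regular_def by metis
  have z: "(\<lambda>f. 0) \<in> BA" "(\<lambda>f. 0) \<in> BI" by (rule AA.bidual_zero, rule AI.bidual_zero)
  have rA: "arens_regular (UNIV :: 'a set) norm (*)"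
    unfolding arens_regular_def
  proof (intro ballI ext)
    fix F F' f assume F: "F \<in> BA" and F': "F' \<in> BA"
    show "arens_box UNIV norm (*) F F' f = arens_diamond UNIV norm (*) F F' f"
    proof (cases "f \<in> DA")
      case True
      have \<Phi>: "eA f \<in> DS" by (rule eA_dual[OF True])
      have "arens_box UNIV norm (*) F F' f = arens_box SC amalg_norm MM (L F (\<lambda>f. 0)) (L F' (\<lambda>f. 0)) (eA f)"
        using box_exp[OF F F' z(2) z(2) \<Phi>] True by (simp add: pA_ea pI_ea arens_box_def AA.bidual_zero_fun[OF F])
      also have "\<dots> = arens_diamond SC amalg_norm MM (L F (\<lambda>f. 0)) (L F' (\<lambda>f. 0)) (eA f)"
        by (rule RS[OF L_bidual[OF F z(2)] L_bidual[OF F' z(2)]])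
      also have "\<dots> = arens_diamond UNIV norm (*) F F' f"
        using diamond_exp[OF F F' z(2) z(2) \<Phi>] True by (simp add: pA_ea pI_ea arens_diamond_def AA.bidual_zero_fun[OF F'])
      finally show ?thesis .
    next
      case False then show ?thesis by (simp add: arens_box_def arens_diamond_def)
    qed
  qed
  have rI: "arens_regular I norm (*)"
    unfolding arens_regular_def
  proof (intro ballI ext)
    fix G G' f assume G: "G \<in> BI" and G': "G' \<in> BI"
    show "arens_box I norm (*) G G' f = arens_diamond I norm (*) G G' f"
    proof (cases "f \<in> DI")
      case True
      have \<Phi>: "eI f \<in> DS" by (rule eI_dual[OF True])
      have "arens_box I norm (*) G G' f = arens_box SC amalg_norm MM (L (\<lambda>f. 0) G) (L (\<lambda>f. 0) G') (eI f)"
        using box_exp[OF z(1) z(1) G G' \<Phi>] True by (simp add: pA_ei pI_ei arens_box_def AI.bidual_zero_fun[OF G])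
      also have "\<dots> = arens_diamond SC amalg_norm MM (L (\<lambda>f. 0) G) (L (\<lambda>f. 0) G') (eI f)"
        by (rule RS[OF L_bidual[OF z(1) G] L_bidual[OF z(1) G']])
      also have "\<dots> = arens_diamond I norm (*) G G' f"
        using diamond_exp[OF z(1) z(1) G G' \<Phi>] True by (simp add: pA_ei pI_ei arens_diamond_def AI.bidual_zero_fun[OF G'])
      finally show ?thesis .
    next
      case False then show ?thesis by (simp add: arens_box_def arens_diamond_def)
    qed
  qed
  have cross: "arens_box UNIV norm (*) F0 G0 = arens_diamond UNIV norm (*) F0 G0
              \<and> arens_box UNIV norm (*) G0 F0 = arens_diamond UNIV norm (*) G0 F0"
    if F0in: "F0 \<in> second_adjoint \<theta> ` BA" and G0in: "G0 \<in> incl_bidual I ` BI" for F0 G0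
  proof -
    obtain F where F: "F \<in> BA" "F0 = second_adjoint \<theta> F" using F0in by blast
    obtain G where G: "G \<in> BI" "G0 = incl_bidual I G" using G0in by blast
    have c1: "arens_box UNIV norm (*) F0 G0 g = arens_diamond UNIV norm (*) F0 G0 g" for g
    proof (cases "g \<in> DB")
      case True
      note e = restr_eI[OF True]
      have "arens_box UNIV norm (*) F0 G0 g = arens_box SC amalg_norm MM (L F (\<lambda>f. 0)) (L (\<lambda>f. 0) G) (eI (restr g))"
        using box_exp[OF F(1) z(1) z(2) G(1) e(1)] C1[OF F(1) G(1) True e] F(2) G(2)
        by (simp add: arens_box_def Ff_zero AA.bidual_zero_fun[OF F(1)])
      also have "\<dots> = arens_diamond SC amalg_norm MM (L F (\<lambda>f. 0)) (L (\<lambda>f. 0) G) (eI (restr g))"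
        by (rule RS[OF L_bidual[OF F(1) z(2)] L_bidual[OF z(1) G(1)]])
      also have "\<dots> = arens_diamond UNIV norm (*) F0 G0 g"
        using diamond_exp[OF F(1) z(1) z(2) G(1) e(1)] C2[OF F(1) G(1) True e] F(2) G(2)
        by (simp add: arens_diamond_def fF_zero AI.bidual_zero_fun[OF G(1)])
      finally show ?thesis .
    next
      case False then show ?thesis by (simp add: arens_box_def arens_diamond_def)
    qed
    have c2: "arens_box UNIV norm (*) G0 F0 g = arens_diamond UNIV norm (*) G0 F0 g" for g
    proof (cases "g \<in> DB")
      case True
      note e = restr_eI[OF True]
      have "arens_box UNIV norm (*) G0 F0 g = arens_box SC amalg_norm MM (L (\<lambda>f. 0) G) (L F (\<lambda>f. 0)) (eI (restr g))"
        using box_exp[OF z(1) F(1) G(1) z(2) e(1)] C3[OF F(1) G(1) True e] F(2) G(2)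
        by (simp add: arens_box_def Ff_zero AI.bidual_zero_fun[OF G(1)])
      also have "\<dots> = arens_diamond SC amalg_norm MM (L (\<lambda>f. 0) G) (L F (\<lambda>f. 0)) (eI (restr g))"
        by (rule RS[OF L_bidual[OF z(1) G(1)] L_bidual[OF F(1) z(2)]])
      also have "\<dots> = arens_diamond UNIV norm (*) G0 F0 g"
        using diamond_exp[OF z(1) F(1) G(1) z(2) e(1)] C4[OF F(1) G(1) True e] F(2) G(2)
        by (simp add: arens_diamond_def fF_zero AA.bidual_zero_fun[OF F(1)])
      finally show ?thesis .
    next
      case False then show ?thesis by (simp add: arens_box_def arens_diamond_def)
    qed
    show ?thesis using c1 c2 by (simp add: fun_eq_iff)
  qed
  show "arens_regular (UNIV :: 'a set) norm (*) \<and> arens_regular I norm (*)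
         \<and> (\<forall>F \<in> second_adjoint \<theta> ` BA. \<forall>G \<in> incl_bidual I ` BI.
                arens_box (UNIV :: 'b set) norm (*) F G = arens_diamond (UNIV :: 'b set) norm (*) F G
              \<and> arens_box (UNIV :: 'b set) norm (*) G F = arens_diamond (UNIV :: 'b set) norm (*) G F)"
    using rA rI cross by blast
next
  assume H: "arens_regular (UNIV :: 'a set) norm (*) \<and> arens_regular I norm (*)
         \<and> (\<forall>F \<in> second_adjoint \<theta> ` BA. \<forall>G \<in> incl_bidual I ` BI.
                arens_box (UNIV :: 'b set) norm (*) F G = arens_diamond (UNIV :: 'b set) norm (*) F G
              \<and> arens_box (UNIV :: 'b set) norm (*) G F = arens_diamond (UNIV :: 'b set) norm (*) G F)"
  have rA: "arens_box UNIV norm (*) F F' f = arens_diamond UNIV norm (*) F F' f" if "F \<in> BA" "F' \<in> BA" for F F' f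
    using H that unfolding arens_regular_def by metis
  have rI: "arens_box I norm (*) G G' f = arens_diamond I norm (*) G G' f" if "G \<in> BI" "G' \<in> BI" for G G' f
    using H that unfolding arens_regular_def by metis
  have cr1: "arens_box UNIV norm (*) (second_adjoint \<theta> F) (incl_bidual I G) g = arens_diamond UNIV norm (*) (second_adjoint \<theta> F) (incl_bidual I G) g"
    if "F \<in> BA" "G \<in> BI" for F G g
    using H that by (metis image_eqI)
  have cr2: "arens_box UNIV norm (*) (incl_bidual I G) (second_adjoint \<theta> F) g = arens_diamond UNIV norm (*) (incl_bidual I G) (second_adjoint \<theta> F) g"
    if "F \<in> BA" "G \<in> BI" for F G g
    using H that by (metis image_eqI)
  show "arens_regular SC amalg_norm MM"
    unfolding arens_regular_def
  proof (intro ballI ext)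
    fix X Y \<Phi> assume X: "X \<in> BS" and Y: "Y \<in> BS"
    show "arens_box SC amalg_norm MM X Y \<Phi> = arens_diamond SC amalg_norm MM X Y \<Phi>"
    proof (cases "\<Phi> \<in> DS")
      case True
      obtain g where g: "g \<in> DB" "\<And>i. i \<in> I \<Longrightarrow> g i = \<Phi> (0, i)" using ext_g[OF True] by blast
      define F G F' G' where "F = PA X" "G = PI X" "F' = PA Y" "G' = PI Y"
      have FG: "F \<in> BA" "G \<in> BI" "F' \<in> BA" "G' \<in> BI"
        unfolding F_G_F'_G'_def using PA_bidual PI_bidual X Y by auto
      have XY: "X = L F G" "Y = L F' G'" unfolding F_G_F'_G'_def using X_decomp X Y by auto
      have t2: "F (\<lambda>a. G' (\<lambda>i'. if i' \<in> I then \<Phi> (0, \<theta> a * i') else 0))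
          = G' (\<lambda>i'. if i' \<in> I then F (\<lambda>a. \<Phi> (0, \<theta> a * i')) else 0)"
        using C1[OF FG(1) FG(4) g(1) True g(2)] C2[OF FG(1) FG(4) g(1) True g(2)] cr1[OF FG(1) FG(4)] by simp
      have t3: "G (\<lambda>i. if i \<in> I then F' (\<lambda>a'. \<Phi> (0, i * \<theta> a')) else 0)
          = F' (\<lambda>a'. G (\<lambda>i. if i \<in> I then \<Phi> (0, i * \<theta> a') else 0))"
        using C3[OF FG(3) FG(2) g(1) True g(2)] C4[OF FG(3) FG(2) g(1) True g(2)] cr2[OF FG(3) FG(2)] by simp
      show ?thesis
        unfolding XY box_exp[OF FG(1) FG(3) FG(2) FG(4) True] diamond_exp[OF FG(1) FG(3) FG(2) FG(4) True]
        using rA[OF FG(1) FG(3)] rI[OF FG(2) FG(4)] t2 t3 by simp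
    next
      case False then show ?thesis by (simp add: arens_box_def arens_diamond_def)
    qed
  qed
qed

end

theorem corollary4p2:
  fixes \<theta> :: "'a::{real_normed_algebra,banach} \<Rightarrow> 'b::{real_normed_algebra,banach}"
    and I :: "'b set"
  assumes hom_lin: "bounded_linear \<theta>"
    and hom_mult: "\<And>x y. \<theta> (x * y) = \<theta> x * \<theta> y"
    and hom_norm: "onorm \<theta> \<le> 1"
    and I_subspace: "subspace I"
    and I_closed: "closed I"
    and I_left: "\<And>b i. i \<in> I \<Longrightarrow> b * i \<in> I"
    and I_right: "\<And>b i. i \<in> I \<Longrightarrow> i * b \<in> I"
  shows "arens_regular (amalg_carrier I :: ('a \<times> 'b) set) amalg_norm (amalg_mult \<theta>) \<longleftrightarrow>
           arens_regular (UNIV :: 'a set) norm (*)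
         \<and> arens_regular I norm (*)
         \<and> (\<forall>F \<in> second_adjoint \<theta> ` bidual (UNIV :: 'a set) norm.
              \<forall>G \<in> incl_bidual I ` bidual I norm.
                arens_box (UNIV :: 'b set) norm (*) F G = arens_diamond (UNIV :: 'b set) norm (*) F G
              \<and> arens_box (UNIV :: 'b set) norm (*) G F = arens_diamond (UNIV :: 'b set) norm (*) G F)"
proof -
  interpret amalg \<theta> I by (rule amalg.intro[OF hom_lin hom_mult hom_norm I_subspace I_left I_right])
  show ?thesis by (rule main)
qed

end
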